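(* A compact metric space of negative type has a unique diversity-maximizing measure.
   Context: Let $(X,d)$ be a compact metric space, $Z(x,y)=e^{-d(x,y)}$, $\mathscr{P}(X)$ the set of Borel probability measures on $X$, and $\langle \mu,\nu\rangle_{\mathscr{W}} = \int_X\int_X Z(x,y)\,\mu(dx)\,\nu(dy)$. The maximum diversity is $|X|_+ = \sup_{\mu\in\mathscr{P}(X)} 1/\langle\mu,\mu\rangle_{\mathscr{W}}$ and a diversity-maximizing measure is a $\mu\in\mathscr{P}(X)$ attaining it. $X$ is of negative type if $(X,\sqrt d)$ embeds isometrically into a Hilbert space. *)

theory Defs
  imports "HOL-Analysis.Analysis" "HOL-Probability.Probability"
begin

definition borel_prob_measures :: "'a::metric_space set \<Rightarrow> 'a measure set" where
  "borel_prob_measures X = {M. sets M = sets (restrict_space borel X) \<and> prob_space M}"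

definition simkernel :: "'a::metric_space \<Rightarrow> 'a \<Rightarrow> real" where
  "simkernel x y = exp (- dist x y)"

definition sim_pairing :: "'a::metric_space measure \<Rightarrow> 'a measure \<Rightarrow> real" where
  "sim_pairing \<mu> \<nu> = (\<integral>y. (\<integral>x. simkernel x y \<partial>\<mu>) \<partial>\<nu>)"

definition max_diversity :: "'a::metric_space set \<Rightarrow> real" where
  "max_diversity X = (SUP \<mu> \<in> borel_prob_measures X. 1 / sim_pairing \<mu> \<mu>)"

definition diversity_maximizing :: "'a::metric_space set \<Rightarrow> 'a measure \<Rightarrow> bool" where
  "diversity_maximizing X \<mu> \<longleftrightarrow>
     \<mu> \<in> borel_prob_measures X \<and> 1 / sim_pairing \<mu> \<mu> = max_diversity X"

text \<open>X is of negative type iff (X, sqrt d) embeds isometrically into the Hilbert space 'h.\<close>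
definition neg_type_into :: "'a::metric_space set \<Rightarrow> ('a \<Rightarrow> 'h::{real_inner,complete_space}) \<Rightarrow> bool" where
  "neg_type_into X f \<longleftrightarrow> (\<forall>x\<in>X. \<forall>y\<in>X. dist (f x) (f y) = sqrt (dist x y))"

end

theory Submission
  imports Defs
begin

lemma disc:
  fixes M :: "'b measure" and A :: "'i \<Rightarrow> 'b set"
  assumes P: "prob_space M" and fin: "finite W"
   and A: "\<And>v. v\<in>W \<Longrightarrow> A v \<in> sets M"
   and disj: "disjoint_family_on A W"
   and cover: "\<And>x. x \<in> space M \<Longrightarrow> \<exists>v\<in>W. x \<in> A v"
   and int: "integrable M f"
   and bd: "\<And>v x. v\<in>W \<Longrightarrow> x \<in> A v \<Longrightarrow> \<bar>f x - c v\<bar> \<le> e"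
  shows "\<bar>(\<integral>x. f x \<partial>M) - (\<Sum>v\<in>W. measure M (A v) * c v)\<bar> \<le> e"
proof -
  interpret prob_space M by fact
  define g where "g x = (\<Sum>v\<in>W. indicator (A v) x * c v)" for x
  have gint: "integrable M g"
    unfolding g_def using A by (auto intro!: integrable_sum integrable_mult_left integrable_mult_right integrable_real_indicator
      simp: emeasure_eq_measure)
  have gi: "(\<integral>x. g x \<partial>M) = (\<Sum>v\<in>W. measure M (A v) * c v)"
    unfolding g_def using A 
    by (subst Bochner_Integration.integral_sum) (auto intro!: sum.cong integrable_mult_left integrable_real_indicator 
        simp: emeasure_eq_measure Int_absorb2 sets.sets_into_space)
  have gv: "g x = c v" if "v \<in> W" "x \<in> A v" for v x
  proof -
    have "g x = indicator (A v) x * c v + (\<Sum>u\<in>W-{v}. indicator (A u) x * c u)"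
      unfolding g_def by (rule sum.remove[OF fin that(1)])
    also have "(\<Sum>u\<in>W-{v}. indicator (A u) x * c u) = 0"
      using disj that unfolding disjoint_family_on_def by (intro sum.neutral) (auto split: split_indicator)
    finally show ?thesis using that by simp
  qed
  have fg: "\<bar>f x - g x\<bar> \<le> e" if "x \<in> space M" for x
    using cover[OF that] gv bd by force
  have h1: "(\<integral>x. f x - g x \<partial>M) \<le> (\<integral>x. e \<partial>M)"
    using int gint fg by (intro integral_mono) (auto simp: abs_le_iff)
  have h2: "(\<integral>x. g x - f x \<partial>M) \<le> (\<integral>x. e \<partial>M)"
    using int gint fg by (intro integral_mono) (auto simp: abs_le_iff)
  have "\<bar>(\<integral>x. f x \<partial>M) - (\<integral>x. g x \<partial>M)\<bar> \<le> (\<integral>x. e \<partial>M)"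
    using h1 h2 int gint by (simp add: abs_le_iff)
  also have "\<dots> = e" by (simp add: prob_space)
  finally show ?thesis using gi by simp
qed

lemma double_disc:
  fixes M1 :: "'b measure" and M2 :: "'c measure"
  assumes P1: "prob_space M1" and P2: "prob_space M2" and fin: "finite W"
   and A1: "\<And>v. v\<in>W \<Longrightarrow> A1 v \<in> sets M1"
   and disj1: "disjoint_family_on A1 W"
   and cover1: "\<And>x. x \<in> space M1 \<Longrightarrow> \<exists>v\<in>W. x \<in> A1 v"
   and A2: "\<And>v. v\<in>W \<Longrightarrow> A2 v \<in> sets M2"
   and disj2: "disjoint_family_on A2 W"
   and cover2: "\<And>x. x \<in> space M2 \<Longrightarrow> \<exists>v\<in>W. x \<in> A2 v"
   and int1: "\<And>t. t \<in> space M2 \<Longrightarrow> integrable M1 (\<lambda>s. F s t)"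
   and int2: "integrable M2 (\<lambda>t. \<integral>s. F s t \<partial>M1)"
   and bd: "\<And>v w s t. v\<in>W \<Longrightarrow> w\<in>W \<Longrightarrow> s \<in> A1 v \<Longrightarrow> t \<in> A2 w \<Longrightarrow> \<bar>F s t - c v w\<bar> \<le> e"
  shows "\<bar>(\<integral>t. (\<integral>s. F s t \<partial>M1) \<partial>M2) - (\<Sum>w\<in>W. measure M2 (A2 w) * (\<Sum>v\<in>W. measure M1 (A1 v) * c v w))\<bar> \<le> e"
proof (rule disc[OF P2 fin A2 disj2 cover2 int2])
  fix w t assume w: "w \<in> W" and t: "t \<in> A2 w"
  then have "t \<in> space M2" using A2 sets.sets_into_space by blast
  then show "\<bar>(\<integral>s. F s t \<partial>M1) - (\<Sum>v\<in>W. measure M1 (A1 v) * c v w)\<bar> \<le> e"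
    using w t by (intro disc[OF P1 fin A1 disj1 cover1 int1]) (auto intro: bd)
qed

lemma orth_expand:
  fixes E :: "'h::real_inner set"
  assumes fin: "finite E" and po: "pairwise orthogonal E" and nz: "0 \<notin> E" and x: "x \<in> span E"
  shows "x = (\<Sum>e\<in>E. ((e \<bullet> x) / (e \<bullet> e)) *\<^sub>R e)"
proof -
  define y where "y = x - (\<Sum>e\<in>E. ((e \<bullet> x) / (e \<bullet> e)) *\<^sub>R e)"
  have ys: "y \<in> span E" unfolding y_def using x
    by (metis (no_types, lifting) span_diff span_sum span_mul span_base x)
  have "orthogonal y e" if e: "e \<in> E" for e
  proof -
    have "(\<Sum>e'\<in>E. ((e' \<bullet> x) / (e' \<bullet> e')) * (e \<bullet> e')) = ((e \<bullet> x) / (e \<bullet> e)) * (e \<bullet> e)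
       + (\<Sum>e'\<in>E-{e}. ((e' \<bullet> x) / (e' \<bullet> e')) * (e \<bullet> e'))"
      using fin e by (rule sum.remove)
    also have "(\<Sum>e'\<in>E-{e}. ((e' \<bullet> x) / (e' \<bullet> e')) * (e \<bullet> e')) = 0"
      using po e by (intro sum.neutral) (auto simp: pairwise_def orthogonal_def)
    also have "((e \<bullet> x) / (e \<bullet> e)) * (e \<bullet> e) = e \<bullet> x"
      using nz e by auto
    finally show ?thesis unfolding y_def orthogonal_def
      by (simp add: inner_diff_right inner_sum_right inner_commute)
  qed
  then have "orthogonal y y"
    using orthogonal_to_span[OF ys] by (simp add: orthogonal_commute)
  then have "y = 0" by (simp add: orthogonal_def)
  then show ?thesis unfolding y_def by simp
qed

lemma inner_pow_pd:
  fixes a :: "'i \<Rightarrow> 'h::real_inner"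
  assumes fin: "finite I"
  shows "0 \<le> (\<Sum>i\<in>I. \<Sum>j\<in>I. d i * d j * (a i \<bullet> a j) ^ n)"
proof (induction n arbitrary: d)
  case 0
  have "(\<Sum>i\<in>I. \<Sum>j\<in>I. d i * d j * (a i \<bullet> a j) ^ 0) = (\<Sum>i\<in>I. d i) * (\<Sum>i\<in>I. d i)"
    by (simp add: sum_product)
  then show ?case by simp
next
  case (Suc n)
  obtain C where C: "finite C" "span C = span (a ` I)" "pairwise orthogonal C"
    using basis_orthogonal[of "a ` I"] fin by auto
  define E where "E = C - {0}"
  have E: "finite E" "pairwise orthogonal E" "0 \<notin> E" "span E = span (a ` I)"
    using C unfolding E_def by (auto simp: pairwise_def span_delete_0)
  have exp: "a i \<bullet> a j = (\<Sum>e\<in>E. (e \<bullet> a i) * (e \<bullet> a j) / (e \<bullet> e))" if "i \<in> I" for i j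
  proof -
    have "a i \<in> span E" using E(4) that by (simp add: span_base)
    then have "a i = (\<Sum>e\<in>E. ((e \<bullet> a i) / (e \<bullet> e)) *\<^sub>R e)"
      using orth_expand E by blast
    then have "a i \<bullet> a j = (\<Sum>e\<in>E. ((e \<bullet> a i) / (e \<bullet> e)) *\<^sub>R e) \<bullet> a j" by simp
    also have "\<dots> = (\<Sum>e\<in>E. (e \<bullet> a i) * (e \<bullet> a j) / (e \<bullet> e))"
      by (simp add: inner_sum_left)
    finally show ?thesis .
  qed
  have "(\<Sum>i\<in>I. \<Sum>j\<in>I. d i * d j * (a i \<bullet> a j) ^ Suc n)
      = (\<Sum>i\<in>I. \<Sum>j\<in>I. \<Sum>e\<in>E. (1 / (e \<bullet> e)) * ((d i * (e \<bullet> a i)) * (d j * (e \<bullet> a j)) * (a i \<bullet> a j) ^ n))"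
    by (intro sum.cong refl) (simp add: exp sum_distrib_left sum_distrib_right algebra_simps)
  also have "\<dots> = (\<Sum>e\<in>E. (1 / (e \<bullet> e)) * (\<Sum>i\<in>I. \<Sum>j\<in>I. (d i * (e \<bullet> a i)) * (d j * (e \<bullet> a j)) * (a i \<bullet> a j) ^ n))"
    by (simp add: sum_distrib_left sum.swap[of _ E] sum.swap[of _ E I])
  also have "\<dots> \<ge> 0"
    by (intro sum_nonneg mult_nonneg_nonneg Suc) simp
  finally show ?case .
qed

lemma gauss_pd:
  fixes a :: "'i \<Rightarrow> 'h::real_inner"
  assumes fin: "finite I"
  shows "0 \<le> (\<Sum>i\<in>I. \<Sum>j\<in>I. c i * c j * exp (- (norm (a i - a j) ^ 2)))"
proof -
  define d where "d i = c i * exp (- (a i \<bullet> a i))" for i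
  have e: "c i * c j * exp (- (norm (a i - a j) ^ 2)) = d i * d j * exp (2 * (a i \<bullet> a j))" for i j
  proof -
    have "(norm (a i - a j)) ^ 2 = a i \<bullet> a i + a j \<bullet> a j - 2 * (a i \<bullet> a j)"
      by (simp add: power2_norm_eq_inner inner_diff_left inner_diff_right inner_commute)
    then have "exp (- (norm (a i - a j) ^ 2)) = exp (- (a i \<bullet> a i)) * exp (- (a j \<bullet> a j)) * exp (2 * (a i \<bullet> a j))"
      by (simp add: exp_add[symmetric] exp_diff)
    then show ?thesis unfolding d_def by simp
  qed
  have s: "(\<lambda>n. \<Sum>i\<in>I. \<Sum>j\<in>I. d i * d j * ((2 * (a i \<bullet> a j))^n / fact n)) sums
      (\<Sum>i\<in>I. \<Sum>j\<in>I. d i * d j * exp (2 * (a i \<bullet> a j)))"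
    using exp_converges[of "2 * (a _ \<bullet> a _)"]
    by (intro sums_sum sums_mult) (simp add: divide_inverse mult.commute)
  have nn: "0 \<le> (\<Sum>i\<in>I. \<Sum>j\<in>I. d i * d j * ((2 * (a i \<bullet> a j))^n / fact n))" for n
  proof -
    have "(\<Sum>i\<in>I. \<Sum>j\<in>I. d i * d j * ((2 * (a i \<bullet> a j))^n / fact n))
       = (2^n / fact n) * (\<Sum>i\<in>I. \<Sum>j\<in>I. d i * d j * (a i \<bullet> a j)^n)"
      by (simp add: sum_distrib_left power_mult_distrib algebra_simps)
    also have "\<dots> \<ge> 0" using inner_pow_pd[OF fin, of d a n] by (intro mult_nonneg_nonneg) auto
    finally show ?thesis .
  qed
  have "0 \<le> (\<Sum>i\<in>I. \<Sum>j\<in>I. d i * d j * exp (2 * (a i \<bullet> a j)))"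
    using sums_le[OF _ sums_zero s] nn by auto
  then show ?thesis by (simp add: e)
qed


lemma exp_lip: "\<bar>exp (- a) - exp (- b)\<bar> \<le> \<bar>a - b\<bar>" if "0 \<le> a" "0 \<le> b" for a b :: real
proof -
  have *: "exp (- a) - exp (- b) \<le> b - a" if "0 \<le> a" "a \<le> b" for a b :: real
  proof -
    have "exp (- a) - exp (- b) = exp (- a) * (1 - exp (- (b - a)))"
      by (simp add: right_diff_distrib exp_add[symmetric])
    also have "\<dots> \<le> 1 * (1 - exp (- (b - a)))"
      using that by (intro mult_right_mono) auto
    also have "\<dots> \<le> b - a" using exp_ge_add_one_self[of "a - b"] by (simp only: minus_diff_eq mult_1)
    finally show ?thesis .
  qed
  show ?thesis
  proof (cases "a \<le> b")
    case True
    then have "exp (- b) \<le> exp (- a)" by simp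
    then show ?thesis using *[of a b] True that by auto
  next
    case False
    then have "exp (- a) \<le> exp (- b)" by simp
    then show ?thesis using *[of b a] False that by auto
  qed
qed

lemma simkernel_lip:
  "\<bar>simkernel x y - simkernel x' y'\<bar> \<le> dist x x' + dist y y'"
proof -
  have "\<bar>simkernel x y - simkernel x' y'\<bar> \<le> \<bar>dist x y - dist x' y'\<bar>"
    unfolding simkernel_def by (rule exp_lip) auto
  also have "\<dots> \<le> dist x x' + dist y y'"
  proof -
    have "dist x y \<le> dist x x' + dist x' y" "dist x' y \<le> dist x' y' + dist y' y"
         "dist x' y' \<le> dist x' x + dist x y'" "dist x y' \<le> dist x y + dist y y'"
      by (rule dist_triangle)+
    then show ?thesis by (simp add: dist_commute abs_le_iff)
  qed
  finally show ?thesis .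
qed

lemma simkernel_bound: "0 < simkernel x y" "simkernel x y \<le> 1"
  unfolding simkernel_def by auto

lemma simkernel_abs: "\<bar>simkernel x y\<bar> \<le> 1"
  using simkernel_bound[of x y] by simp

lemma simkernel_sym: "simkernel x y = simkernel y x"
  unfolding simkernel_def by (simp add: dist_commute)

lemma continuous_simkernel1: "continuous_on S (\<lambda>x. simkernel x y)"
  unfolding simkernel_def by (intro continuous_intros)

lemma continuous_simkernel2: "continuous_on S (\<lambda>y. simkernel x y)"
  unfolding simkernel_def by (intro continuous_intros)

locale cset =
  fixes X :: "'a::metric_space set"
  assumes cpt: "compact X" and ne: "X \<noteq> {}"
begin

abbreviation "PX \<equiv> borel_prob_measures X"

lemma PX_D:
  assumes "M \<in> PX"
  shows "prob_space M" "sets M = sets (restrict_space borel X)" "space M = X"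
proof -
  show "prob_space M" "sets M = sets (restrict_space borel X)" using assms unfolding borel_prob_measures_def by auto
  then have "space M = space (restrict_space borel X)" by (intro sets_eq_imp_space_eq) simp
  then show "space M = X" by (simp add: space_restrict_space)
qed

lemma meas_cont:
  assumes "M \<in> PX" "continuous_on X g"
  shows "g \<in> borel_measurable M"
proof -
  have eq: "measurable M borel = measurable (restrict_space borel X) borel"
    by (rule measurable_cong_sets[OF PX_D(2)[OF assms(1)] refl])
  show ?thesis unfolding eq by (rule borel_measurable_continuous_on_restrict[OF assms(2)])
qed

lemma int_cont:
  fixes g :: "'a \<Rightarrow> real"
  assumes "M \<in> PX" "continuous_on X g" "\<And>x. x \<in> X \<Longrightarrow> \<bar>g x\<bar> \<le> B"
  shows "integrable M g"
proof -
  interpret prob_space M using PX_D[OF assms(1)] by simp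
  show ?thesis
  proof (rule integrable_const_bound[where B=B])
    show "AE x in M. norm (g x) \<le> B" using assms(3) PX_D(3)[OF assms(1)] by (intro AE_I2) auto
    show "g \<in> borel_measurable M" by (rule meas_cont[OF assms(1,2)])
  qed
qed

lemma int_K1: "M \<in> PX \<Longrightarrow> integrable M (\<lambda>x. simkernel x y)"
  by (rule int_cont[where B=1]) (auto intro: continuous_simkernel1 simkernel_abs)

definition phi where "phi M y = (\<integral>x. simkernel x y \<partial>M)"

lemma phi_lip:
  assumes "M \<in> PX"
  shows "\<bar>phi M y - phi M y'\<bar> \<le> dist y y'"
proof -
  interpret prob_space M using PX_D[OF assms(1)] by simp
  have l1: "simkernel x y - simkernel x y' \<le> dist y y'" "simkernel x y' - simkernel x y \<le> dist y y'" for x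
    using simkernel_lip[of x y x y'] by (auto simp: abs_le_iff)
  have "phi M y - phi M y' = (\<integral>x. simkernel x y - simkernel x y' \<partial>M)"
    unfolding phi_def using int_K1[OF assms] by simp
  moreover have "(\<integral>x. simkernel x y - simkernel x y' \<partial>M) \<le> (\<integral>x. dist y y' \<partial>M)"
    using int_K1[OF assms] l1 by (intro integral_mono) auto
  moreover have "(\<integral>x. simkernel x y' - simkernel x y \<partial>M) \<le> (\<integral>x. dist y y' \<partial>M)"
    using int_K1[OF assms] l1 by (intro integral_mono) auto
  moreover have "(\<integral>x. simkernel x y' - simkernel x y \<partial>M) = - (\<integral>x. simkernel x y - simkernel x y' \<partial>M)"
    using int_K1[OF assms] by simp
  ultimately show ?thesis by (simp add: prob_space abs_le_iff)
qed

lemma phi_cont: "M \<in> PX \<Longrightarrow> continuous_on S (phi M)"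
  unfolding continuous_on_iff
proof (intro ballI allI impI)
  fix x and e :: real assume M: "M \<in> PX" and "x \<in> S" "0 < e"
  show "\<exists>d>0. \<forall>x'\<in>S. dist x' x < d \<longrightarrow> dist (phi M x') (phi M x) < e"
  proof (intro exI[of _ e] conjI ballI impI)
    fix x' assume "dist x' x < e"
    then show "dist (phi M x') (phi M x) < e"
      using phi_lip[OF M, of x' x] unfolding dist_real_def by linarith
  qed fact
qed

lemma phi_bound: "M \<in> PX \<Longrightarrow> 0 \<le> phi M y \<and> phi M y \<le> 1"
proof -
  assume M: "M \<in> PX"
  interpret prob_space M using PX_D[OF M] by simp
  have "(\<integral>x. simkernel x y \<partial>M) \<le> (\<integral>x. 1 \<partial>M)"
    using int_K1[OF M] simkernel_bound by (intro integral_mono) (auto)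
  moreover have "0 \<le> (\<integral>x. simkernel x y \<partial>M)"
    using simkernel_bound(1)[THEN less_imp_le] by (intro Bochner_Integration.integral_nonneg) auto
  ultimately show ?thesis unfolding phi_def by (simp add: prob_space)
qed

lemma int_phi: "M \<in> PX \<Longrightarrow> N \<in> PX \<Longrightarrow> integrable N (phi M)"
proof -
  assume M: "M \<in> PX" and N: "N \<in> PX"
  have "\<bar>phi M y\<bar> \<le> 1" for y using phi_bound[OF M, of y] by (simp add: abs_le_iff)
  then show ?thesis by (intro int_cont[where B=1] N phi_cont M)
qed

lemma sim_pairing_phi: "sim_pairing M N = (\<integral>y. phi M y \<partial>N)"
  unfolding sim_pairing_def phi_def ..

end


definition rr :: "nat \<Rightarrow> real" where "rr k = (1/2)^k"

lemma rr_pos: "0 < rr k" unfolding rr_def by simp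

context cset
begin

definition ctr where "ctr k = (SOME l. set l \<subseteq> X \<and> X \<subseteq> (\<Union>x\<in>set l. ball x (rr k)))"

lemma ctr: "set (ctr k) \<subseteq> X \<and> X \<subseteq> (\<Union>x\<in>set (ctr k). ball x (rr k))"
proof -
  obtain C' where C': "C' \<subseteq> X" "finite C'" "X \<subseteq> (\<Union>x\<in>C'. ball x (rr k))"
  proof (rule compactE_image[OF cpt, of X "\<lambda>x. ball x (rr k)"])
    show "X \<subseteq> (\<Union>x\<in>X. ball x (rr k))" using rr_pos by auto
  qed auto
  obtain l where "set l = C'" using finite_list[OF C'(2)] by blast
  then have "\<exists>l. set l \<subseteq> X \<and> X \<subseteq> (\<Union>x\<in>set l. ball x (rr k))" using C' by blast
  then show ?thesis unfolding ctr_def by (rule someI_ex)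
qed

definition NN where "NN k = length (ctr k)"
definition zz where "zz k j = ctr k ! j"

lemma zz_X: "j < NN k \<Longrightarrow> zz k j \<in> X"
  using ctr[of k] unfolding NN_def zz_def by (auto simp: set_conv_nth)

lemma cover_zz: "x \<in> X \<Longrightarrow> \<exists>j<NN k. x \<in> ball (zz k j) (rr k)"
  using ctr[of k] unfolding NN_def zz_def by (force simp: set_conv_nth)

lemma NN_pos: "0 < NN k"
proof -
  obtain x where "x \<in> X" using ne by auto
  then obtain j where "j < NN k" using cover_zz by blast
  then show ?thesis by simp
qed

definition BB where "BB k j = (if j < NN k then X \<inter> ball (zz k j) (rr k) - (\<Union>i\<in>{..<j}. ball (zz k i) (rr k)) else {})"

lemma BB_cover: "x \<in> X \<Longrightarrow> \<exists>j<NN k. x \<in> BB k j"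
proof -
  assume x: "x \<in> X"
  define j where "j = (LEAST j. j < NN k \<and> x \<in> ball (zz k j) (rr k))"
  have "j < NN k \<and> x \<in> ball (zz k j) (rr k)"
    unfolding j_def using cover_zz[OF x, of k] by (metis (mono_tags, lifting) LeastI)
  moreover have "x \<notin> ball (zz k i) (rr k)" if "i < j" for i
    using not_less_Least[OF that[unfolded j_def]] that j_def calculation by auto
  ultimately show ?thesis using x unfolding BB_def by (intro exI[of _ j]) auto
qed

lemma BB_disj: "x \<in> BB k i \<Longrightarrow> x \<in> BB k j \<Longrightarrow> i = j"
  unfolding BB_def by (auto split: if_splits) (metis linorder_neqE_nat lessThan_iff)

lemma BB_sub: "BB k j \<subseteq> X" "j < NN k \<Longrightarrow> BB k j \<subseteq> ball (zz k j) (rr k)"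
  unfolding BB_def by auto

lemma BB_sets: "BB k j \<in> sets (restrict_space borel X)"
proof -
  have "BB k j = X \<inter> (if j < NN k then ball (zz k j) (rr k) - (\<Union>i\<in>{..<j}. ball (zz k i) (rr k)) else {})"
    unfolding BB_def by auto
  moreover have "(if j < NN k then ball (zz k j) (rr k) - (\<Union>i\<in>{..<j}. ball (zz k i) (rr k)) else {}) \<in> sets borel"
    by auto
  ultimately show ?thesis unfolding sets_restrict_space by blast
qed

fun CC where "CC [] = X" | "CC (j#w) = CC w \<inter> BB (length w) j"

fun WW where "WW 0 = {[]}" | "WW (Suc k) = (\<lambda>(j,w). j#w) ` ({..<NN k} \<times> WW k)"

lemma WW_finite: "finite (WW k)"
  by (induction k) auto

lemma WW_length: "w \<in> WW k \<Longrightarrow> length w = k"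
  by (induction k arbitrary: w) auto

lemma WW_Cons: "j#w \<in> WW (Suc k) \<longleftrightarrow> j < NN k \<and> w \<in> WW k"
  by auto

lemma WW_Suc_cases: "v \<in> WW (Suc k) \<Longrightarrow> \<exists>j w. v = j#w \<and> j < NN k \<and> w \<in> WW k"
  by auto

lemma CC_sub: "CC w \<subseteq> X"
  by (induction w) auto

lemma CC_sets: "CC w \<in> sets (restrict_space borel X)"
proof (induction w)
  case Nil
  have "X \<in> sets (restrict_space borel X)"
    using sets.top[of "restrict_space borel X"] by (simp add: space_restrict_space)
  then show ?case by simp
next
  case (Cons j w)
  then show ?case using BB_sets by simp
qed

lemma CC_cover: "x \<in> X \<Longrightarrow> \<exists>w\<in>WW k. x \<in> CC w"
proof (induction k)
  case 0 then show ?case by simp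
next
  case (Suc k)
  then obtain w where w: "w \<in> WW k" "x \<in> CC w" by blast
  obtain j where "j < NN k" "x \<in> BB k j" using BB_cover[OF Suc.prems] by blast
  then show ?case using w WW_length[OF w(1)] by (intro bexI[of _ "j#w"]) auto
qed

lemma CC_disj: "v \<in> WW k \<Longrightarrow> w \<in> WW k \<Longrightarrow> x \<in> CC v \<Longrightarrow> x \<in> CC w \<Longrightarrow> v = w"
proof (induction k arbitrary: v w)
  case 0 then show ?case by simp
next
  case (Suc k)
  obtain j v' where v: "v = j#v'" "v' \<in> WW k" using WW_Suc_cases[OF Suc.prems(1)] by blast
  obtain i w' where w: "w = i#w'" "w' \<in> WW k" using WW_Suc_cases[OF Suc.prems(2)] by blast
  have "v' = w'" using Suc v w by auto
  moreover have "j = i" using Suc.prems(3,4) v w BB_disj WW_length[OF v(2)] WW_length[OF w(2)] by auto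
  ultimately show ?case using v w by simp
qed

lemma CC_disjoint_family: "disjoint_family_on CC (WW k)"
  unfolding disjoint_family_on_def using CC_disj by blast

lemma CC_ball: "j < NN (length w) \<Longrightarrow> CC (j#w) \<subseteq> ball (zz (length w) j) (rr (length w))"
  using BB_sub(2) by auto

lemma CC_Cons_empty: "\<not> j < NN (length w) \<Longrightarrow> CC (j#w) = {}"
  by (simp add: BB_def)

lemma CC_diam: "v \<in> WW (Suc k) \<Longrightarrow> x \<in> CC v \<Longrightarrow> y \<in> CC v \<Longrightarrow> dist x y < 2 * rr k"
proof -
  assume v: "v \<in> WW (Suc k)" and x: "x \<in> CC v" and y: "y \<in> CC v"
  obtain j w where jw: "v = j#w" "j < NN k" "w \<in> WW k" using WW_Suc_cases[OF v] by blast
  have lw: "length w = k" using WW_length jw by auto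
  have "x \<in> ball (zz k j) (rr k)" "y \<in> ball (zz k j) (rr k)"
    using CC_ball[of j w] x y jw lw by auto
  then show ?thesis
    by (smt (verit) dist_commute dist_triangle mem_ball)
qed

lemma CC_split: "w \<in> WW k \<Longrightarrow> CC w = (\<Union>j\<in>{..<NN k}. CC (j#w))"
proof -
  assume w: "w \<in> WW k"
  have lw: "length w = k" using WW_length w by auto
  show ?thesis
  proof (intro equalityI subsetI)
    fix x assume x: "x \<in> CC w"
    then obtain j where "j < NN k" "x \<in> BB k j" using BB_cover CC_sub by blast
    then show "x \<in> (\<Union>j\<in>{..<NN k}. CC (j#w))" using x lw by auto
  qed auto
qed

lemma CC_split_disj: "disjoint_family_on (\<lambda>j. CC (j#w)) A"
  unfolding disjoint_family_on_def using BB_disj by auto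

lemma sum_WW_Suc: "(\<Sum>v\<in>WW (Suc k). g v) = (\<Sum>w\<in>WW k. \<Sum>j<NN k. g (j#w))"
proof -
  have inj: "inj_on (\<lambda>(j,w). j#w) ({..<NN k} \<times> WW k)"
    by (auto simp: inj_on_def)
  have "(\<Sum>v\<in>WW (Suc k). g v) = (\<Sum>(j,w)\<in>{..<NN k} \<times> WW k. g (j#w))"
    unfolding WW.simps by (subst sum.reindex[OF inj]) (simp add: o_def split_def)
  also have "\<dots> = (\<Sum>j<NN k. \<Sum>w\<in>WW k. g (j#w))"
    by (rule sum.cartesian_product[symmetric])
  also have "\<dots> = (\<Sum>w\<in>WW k. \<Sum>j<NN k. g (j#w))"
    by (rule sum.swap)
  finally show ?thesis .
qed

definition pt where "pt w = (SOME x. x \<in> CC w)"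

lemma pt_in: "CC w \<noteq> {} \<Longrightarrow> pt w \<in> CC w"
  unfolding pt_def by (rule someI_ex) auto

definition pm where "pm M w = measure M (CC w)"

lemma pm_nonneg: "0 \<le> pm M w"
  unfolding pm_def by simp

lemma pm_Nil: "M \<in> PX \<Longrightarrow> pm M [] = 1"
proof -
  assume M: "M \<in> PX"
  interpret prob_space M using PX_D[OF M] by simp
  show ?thesis unfolding pm_def using PX_D(3)[OF M] prob_space by simp
qed

lemma pm_add: "M \<in> PX \<Longrightarrow> w \<in> WW k \<Longrightarrow> pm M w = (\<Sum>j<NN k. pm M (j#w))"
proof -
  assume M: "M \<in> PX" and w: "w \<in> WW k"
  interpret prob_space M using PX_D[OF M] by simp
  have "measure M (\<Union>j\<in>{..<NN k}. CC (j#w)) = (\<Sum>j<NN k. measure M (CC (j#w)))"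
    by (rule measure_finite_Union) (use CC_sets PX_D(2)[OF M] CC_split_disj in \<open>auto simp del: CC.simps\<close>)
  moreover have "pm M w = measure M (\<Union>j\<in>{..<NN k}. CC (j#w))"
    unfolding pm_def by (subst CC_split[OF w]) (rule refl)
  ultimately show ?thesis unfolding pm_def by simp
qed

lemma pm_pos: "0 < pm M w \<Longrightarrow> CC w \<noteq> {}"
  unfolding pm_def by auto

definition Sp where "Sp q1 q2 k = (\<Sum>w\<in>WW k. q2 w * (\<Sum>v\<in>WW k. q1 v * simkernel (pt v) (pt w)))"

lemma kernel_close:
  assumes v: "v \<in> WW (Suc k)" and w: "w \<in> WW (Suc k)" and s: "s \<in> closure (CC v)" and t: "t \<in> closure (CC w)"
  shows "\<bar>simkernel s t - simkernel (pt v) (pt w)\<bar> \<le> 4 * rr k"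
proof -
  have dv: "dist s (pt v) \<le> 2 * rr k"
  proof -
    have ne: "CC v \<noteq> {}" using s by auto
    have "CC v \<subseteq> cball (pt v) (2 * rr k)"
      using CC_diam[OF v _ pt_in[OF ne]] by (force simp: dist_commute)
    then have "closure (CC v) \<subseteq> cball (pt v) (2 * rr k)" by (rule closure_minimal) simp
    then show ?thesis using s by (auto simp: dist_commute)
  qed
  have dw: "dist t (pt w) \<le> 2 * rr k"
  proof -
    have ne: "CC w \<noteq> {}" using t by auto
    have "CC w \<subseteq> cball (pt w) (2 * rr k)"
      using CC_diam[OF w _ pt_in[OF ne]] by (force simp: dist_commute)
    then have "closure (CC w) \<subseteq> cball (pt w) (2 * rr k)" by (rule closure_minimal) simp
    then show ?thesis using t by (auto simp: dist_commute)
  qed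
  show ?thesis using simkernel_lip[of s t "pt v" "pt w"] dv dw by linarith
qed

lemma approx_meas:
  assumes M1: "M1 \<in> PX" and M2: "M2 \<in> PX"
  shows "\<bar>sim_pairing M1 M2 - Sp (pm M1) (pm M2) (Suc k)\<bar> \<le> 4 * rr k"
proof -
  have "\<bar>(\<integral>t. (\<integral>s. simkernel s t \<partial>M1) \<partial>M2) - (\<Sum>w\<in>WW (Suc k). measure M2 (CC w) *
      (\<Sum>v\<in>WW (Suc k). measure M1 (CC v) * simkernel (pt v) (pt w)))\<bar> \<le> 4 * rr k"
  proof (rule double_disc[OF PX_D(1)[OF M1] PX_D(1)[OF M2] WW_finite])
    show "CC v \<in> sets M1" "CC v \<in> sets M2" for v using CC_sets PX_D(2) M1 M2 by auto
    show "disjoint_family_on CC (WW (Suc k))" by (rule CC_disjoint_family)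
    then show "disjoint_family_on CC (WW (Suc k))" .
    show "\<exists>v\<in>WW (Suc k). x \<in> CC v" if "x \<in> space M1" for x
    proof -
      have "x \<in> X" using that PX_D(3)[OF M1] by simp
      then show ?thesis by (rule CC_cover)
    qed
    show "\<exists>v\<in>WW (Suc k). x \<in> CC v" if "x \<in> space M2" for x
    proof -
      have "x \<in> X" using that PX_D(3)[OF M2] by simp
      then show ?thesis by (rule CC_cover)
    qed
    show "integrable M1 (\<lambda>s. simkernel s t)" for t by (rule int_K1[OF M1])
    show "integrable M2 (\<lambda>t. \<integral>s. simkernel s t \<partial>M1)"
      using int_phi[OF M1 M2] unfolding phi_def .
    show "\<bar>simkernel s t - simkernel (pt v) (pt w)\<bar> \<le> 4 * rr k"
      if "v \<in> WW (Suc k)" "w \<in> WW (Suc k)" "s \<in> CC v" "t \<in> CC w" for v w s t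
      using kernel_close[OF that(1,2)] that(3,4) closure_subset by blast
  qed
  then show ?thesis unfolding sim_pairing_def Sp_def pm_def .
qed

end


locale realize = cset X for X :: "'a::metric_space set" +
  fixes p :: "nat list \<Rightarrow> real"
  assumes p_nonneg: "\<And>w. 0 \<le> p w" and p_Nil: "p [] = 1"
   and p_add: "\<And>k w. w \<in> WW k \<Longrightarrow> p w = (\<Sum>j<NN k. p (j#w))"
   and p_pos: "\<And>w. 0 < p w \<Longrightarrow> CC w \<noteq> {}"
begin

fun LL where "LL [] = 0" | "LL (j#w) = LL w + (\<Sum>i<j. p (i#w))"

definition cum where "cum w i = LL w + (\<Sum>l<Suc i. p (l#w))"

definition child where "child t w = (LEAST i. t < cum w i)"

primrec path where "path t 0 = []" | "path t (Suc k) = child t (path t k) # path t k"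

lemma cum_mono: "i \<le> i' \<Longrightarrow> cum w i \<le> cum w i'"
  unfolding cum_def by (intro add_left_mono sum_mono2) (auto intro: p_nonneg)

lemma path_inv:
  assumes t: "0 \<le> t" "t < 1"
  shows "path t k \<in> WW k \<and> LL (path t k) \<le> t \<and> t < LL (path t k) + p (path t k)"
proof (induction k)
  case 0
  then show ?case using t p_Nil by simp
next
  case (Suc k)
  define w where "w = path t k"
  have w: "w \<in> WW k" "LL w \<le> t" "t < LL w + p w" using Suc unfolding w_def by auto
  define n where "n = NN k"
  have n: "0 < n" unfolding n_def by (rule NN_pos)
  have "cum w (n - 1) = LL w + p w"
    unfolding cum_def using n p_add[OF w(1)] by (simp add: n_def)
  then have ex: "t < cum w (n - 1)" using w by simp
  define j where "j = child t w"
  have j: "t < cum w j" unfolding j_def child_def by (rule LeastI[of _ "n - 1"]) (rule ex)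
  have jn: "j \<le> n - 1" unfolding j_def child_def by (rule Least_le) (rule ex)
  have jlt: "\<not> t < cum w i" if "i < j" for i
    using not_less_Least[of i "\<lambda>i. t < cum w i"] that unfolding j_def child_def by blast
  have lw: "length w = k" using WW_length[OF w(1)] .
  have "LL (j#w) \<le> t"
  proof (cases j)
    case 0 then show ?thesis using w by simp
  next
    case (Suc j')
    then have "LL (j#w) = cum w j'" unfolding cum_def by simp
    then show ?thesis using jlt[of j'] Suc by simp
  qed
  moreover have "t < LL (j#w) + p (j#w)" using j unfolding cum_def by simp
  moreover have "j#w \<in> WW (Suc k)" using jn n w(1) unfolding n_def by auto
  ultimately show ?case unfolding w_def j_def by simp
qed

lemma path_pos: "0 \<le> t \<Longrightarrow> t < 1 \<Longrightarrow> 0 < p (path t k)"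
  using path_inv[of t k] by linarith

lemma path_ne: "0 \<le> t \<Longrightarrow> t < 1 \<Longrightarrow> CC (path t k) \<noteq> {}"
  using path_pos p_pos by blast

lemma path_mono: "k \<le> m \<Longrightarrow> CC (path t m) \<subseteq> CC (path t k)"
proof (induction m)
  case 0 then show ?case by simp
next
  case (Suc m)
  then show ?case by (cases "k = Suc m") auto
qed

definition Yk where "Yk k t = pt (path t k)"

lemma Yk_in: "0 \<le> t \<Longrightarrow> t < 1 \<Longrightarrow> Yk m t \<in> CC (path t m)"
  unfolding Yk_def by (rule pt_in[OF path_ne])

lemma Yk_close: "0 \<le> t \<Longrightarrow> t < 1 \<Longrightarrow> Suc k \<le> m \<Longrightarrow> Yk m t \<in> CC (path t (Suc k))"
  using Yk_in path_mono by blast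

lemma Yk_X: "0 \<le> t \<Longrightarrow> t < 1 \<Longrightarrow> Yk m t \<in> X"
  using Yk_in CC_sub by blast

lemma Yk_Cauchy: 
  assumes t: "0 \<le> t" "t < 1"
  shows "Cauchy (\<lambda>m. Yk m t)"
proof (rule metric_CauchyI)
  fix e :: real assume e: "0 < e"
  obtain k where k: "2 * rr k < e"
  proof -
    obtain k where "(1/2::real)^k < e/2" using real_arch_pow_inv[of "e/2" "1/2"] e by auto
    then show ?thesis using that[of k] unfolding rr_def by auto
  qed
  show "\<exists>M. \<forall>m\<ge>M. \<forall>n\<ge>M. dist (Yk m t) (Yk n t) < e"
  proof (intro exI[of _ "Suc k"] allI impI)
    fix m n assume "Suc k \<le> m" "Suc k \<le> n"
    then have "Yk m t \<in> CC (path t (Suc k))" "Yk n t \<in> CC (path t (Suc k))"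
      using Yk_close t by auto
    moreover have "path t (Suc k) \<in> WW (Suc k)" using path_inv t by blast
    ultimately show "dist (Yk m t) (Yk n t) < e" using CC_diam k by fastforce
  qed
qed

definition YY where "YY t = lim (\<lambda>m. Yk m t)"

lemma YY_lim:
  assumes t: "0 \<le> t" "t < 1"
  shows "(\<lambda>m. Yk m t) \<longlonglongrightarrow> YY t" "YY t \<in> X"
proof -
  have "Topological_Spaces.complete X" using compact_imp_complete[OF cpt] .
  then obtain l where "l \<in> X" "(\<lambda>m. Yk m t) \<longlonglongrightarrow> l"
    using completeE[of X "\<lambda>m. Yk m t"] Yk_Cauchy[OF t] Yk_X[OF t] by blast
  then show "(\<lambda>m. Yk m t) \<longlonglongrightarrow> YY t" "YY t \<in> X"
    unfolding YY_def using limI by auto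
qed

lemma YY_closure:
  assumes t: "0 \<le> t" "t < 1"
  shows "YY t \<in> closure (CC (path t (Suc k)))"
proof (rule Lim_in_closed_set[OF closed_closure _ _ YY_lim(1)[OF t]])
  show "\<forall>\<^sub>F x in sequentially. Yk x t \<in> closure (CC (path t (Suc k)))"
    using Yk_close[OF t] closure_subset unfolding eventually_sequentially by blast
qed auto


definition "UU = restrict_space lborel {0..<1::real}"

lemma UU_space: "space UU = {0..<1}"
  unfolding UU_def by (simp add: space_restrict_space)

lemma UU_prob: "prob_space UU"
  unfolding UU_def by (rule prob_space_restrict_space) auto

lemma UU_setsI: "S \<in> sets borel \<Longrightarrow> S \<inter> {0..<1} \<in> sets UU"
  unfolding UU_def sets_restrict_space by auto

lemma child_iff: "child t w = a \<longleftrightarrow>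
   (t < cum w a \<and> (\<forall>i<a. cum w i \<le> t)) \<or> ((\<forall>i. cum w i \<le> t) \<and> (LEAST i::nat. False) = a)"
proof (cases "\<exists>i. t < cum w i")
  case True
  then obtain i0 where i0: "t < cum w i0" by blast
  show ?thesis
  proof
    assume a: "child t w = a"
    have "t < cum w a" using LeastI[of "\<lambda>i. t < cum w i" i0] i0 a unfolding child_def by simp
    moreover have "\<forall>i<a. cum w i \<le> t" using not_less_Least[of _ "\<lambda>i. t < cum w i"] a
      unfolding child_def by (auto simp: not_less)
    ultimately show "(t < cum w a \<and> (\<forall>i<a. cum w i \<le> t)) \<or> ((\<forall>i. cum w i \<le> t) \<and> (LEAST i::nat. False) = a)"
      by blast
  next
    assume "(t < cum w a \<and> (\<forall>i<a. cum w i \<le> t)) \<or> ((\<forall>i. cum w i \<le> t) \<and> (LEAST i::nat. False) = a)"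
    then have "t < cum w a \<and> (\<forall>i<a. cum w i \<le> t)" using i0 by (auto simp: not_less[symmetric])
    then show "child t w = a" unfolding child_def
      by (intro Least_equality) (auto simp: not_less[symmetric])
  qed
next
  case False
  then have "(\<lambda>i. t < cum w i) = (\<lambda>i. False)" by auto
  then have "child t w = (LEAST i::nat. False)" unfolding child_def by simp
  then show ?thesis using False by (auto simp: not_less) (meson leD)
qed

lemma child_meas: "(\<lambda>t. child t w) \<in> measurable UU (count_space UNIV)"
proof (subst measurable_count_space_eq2_countable, intro conjI ballI)
  fix a :: nat
  define S where "S = {t::real. (t < cum w a \<and> (\<forall>i<a. cum w i \<le> t)) \<or> ((\<forall>i. cum w i \<le> t) \<and> (LEAST i::nat. False) = a)}"
  have "S \<in> sets borel" unfolding S_def by measurable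
  moreover have "(\<lambda>t. child t w) -` {a} \<inter> space UU = S \<inter> {0..<1}"
    unfolding S_def UU_space using child_iff by auto
  ultimately show "(\<lambda>t. child t w) -` {a} \<inter> space UU \<in> sets UU" using UU_setsI by simp
qed auto

lemma path_meas: "(\<lambda>t. path t k) \<in> measurable UU (count_space UNIV)"
proof (induction k)
  case 0 then show ?case by simp
next
  case (Suc k)
  have "(\<lambda>t. (\<lambda>w t. child t w # w) (path t k) t) \<in> measurable UU (count_space UNIV)"
  proof (rule measurable_compose_countable[OF _ Suc])
    fix w
    show "(\<lambda>t. child t w # w) \<in> measurable UU (count_space UNIV)"
      using measurable_compose[OF child_meas[of w], of "\<lambda>i. i # w" "count_space UNIV"] by simp
  qed
  then show ?case by simp
qed

lemma Yk_meas: "Yk k \<in> borel_measurable UU"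
proof -
  have "(\<lambda>t. (\<lambda>w t. pt w) (path t k) t) \<in> borel_measurable UU"
    by (rule measurable_compose_countable[OF _ path_meas]) simp
  then show ?thesis unfolding Yk_def by simp
qed

lemma YY_meas_borel: "YY \<in> borel_measurable UU"
  by (rule borel_measurable_LIMSEQ_metric[OF Yk_meas]) (auto simp: UU_space intro: YY_lim)

lemma YY_meas: "YY \<in> measurable UU (restrict_space borel X)"
  by (rule measurable_restrict_space2[OF _ YY_meas_borel]) (auto simp: UU_space intro: YY_lim)

definition "mu = distr UU (restrict_space borel X) YY"

lemma mu_PX: "mu \<in> PX"
  unfolding borel_prob_measures_def mu_def
  using prob_space.prob_space_distr[OF UU_prob YY_meas] by simp

definition "AA k v = {t \<in> {0..<1}. path t k = v}"

lemma AA_sets: "AA k v \<in> sets UU"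
proof -
  have "(\<lambda>t. path t k) -` {v} \<inter> space UU \<in> sets UU"
    using path_meas[of k] unfolding measurable_count_space_eq2_countable by blast
  moreover have "(\<lambda>t. path t k) -` {v} \<inter> space UU = AA k v"
    unfolding AA_def UU_space by auto
  ultimately show ?thesis by simp
qed

lemma sum_p: "(\<Sum>v\<in>WW k. p v) = 1"
proof (induction k)
  case 0 then show ?case using p_Nil by simp
next
  case (Suc k)
  have "(\<Sum>v\<in>WW (Suc k). p v) = (\<Sum>w\<in>WW k. \<Sum>j<NN k. p (j#w))" by (rule sum_WW_Suc)
  also have "\<dots> = (\<Sum>w\<in>WW k. p w)" using p_add by (intro sum.cong) auto
  finally show ?case using Suc by simp
qed

lemma AA_le: "v \<in> WW k \<Longrightarrow> measure UU (AA k v) \<le> p v"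
proof -
  assume v: "v \<in> WW k"
  interpret prob_space UU by (rule UU_prob)
  have sub: "AA k v \<subseteq> {LL v..<LL v + p v}"
    using path_inv unfolding AA_def by auto
  have "emeasure UU (AA k v) = emeasure lborel (AA k v)"
    unfolding UU_def by (rule emeasure_restrict_space) (auto simp: AA_def)
  also have "\<dots> \<le> emeasure lborel {LL v..<LL v + p v}"
    by (rule emeasure_mono[OF sub]) simp
  also have "\<dots> = ennreal (p v)" using p_nonneg[of v] by simp
  finally have "ennreal (measure UU (AA k v)) \<le> ennreal (p v)"
    by (simp add: emeasure_eq_measure)
  then show ?thesis using p_nonneg[of v] by simp
qed

lemma AA_disj: "disjoint_family_on (AA k) A"
  unfolding disjoint_family_on_def AA_def by auto

lemma AA_cover: "t \<in> space UU \<Longrightarrow> \<exists>v\<in>WW k. t \<in> AA k v"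
  unfolding UU_space AA_def using path_inv by auto

lemma AA_meas: "v \<in> WW k \<Longrightarrow> measure UU (AA k v) = p v"
proof -
  interpret prob_space UU by (rule UU_prob)
  have U: "(\<Union>v\<in>WW k. AA k v) = space UU"
    using AA_cover unfolding AA_def UU_space by auto
  have "(\<Sum>v\<in>WW k. measure UU (AA k v)) = measure UU (\<Union>v\<in>WW k. AA k v)"
    by (rule measure_finite_Union[symmetric]) (auto simp: WW_finite AA_sets AA_disj)
  also have "\<dots> = 1" using U prob_space by simp
  finally have s1: "(\<Sum>v\<in>WW k. measure UU (AA k v)) = 1" .
  have "(\<Sum>v\<in>WW k. p v - measure UU (AA k v)) = 0"
    using s1 sum_p by (simp add: sum_subtractf)
  then have "\<forall>v\<in>WW k. p v - measure UU (AA k v) = 0"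
    using sum_nonneg_eq_0_iff[where A="WW k" and f="\<lambda>v. p v - measure UU (AA k v)"] WW_finite AA_le by auto
  then show "v \<in> WW k \<Longrightarrow> measure UU (AA k v) = p v" by auto
qed


lemma K1_meas: "(\<lambda>x. simkernel x y) \<in> borel_measurable (restrict_space borel X)"
  by (rule borel_measurable_continuous_on_restrict[OF continuous_simkernel1])

lemma phi_meas: "M \<in> PX \<Longrightarrow> phi M \<in> borel_measurable (restrict_space borel X)"
  by (rule borel_measurable_continuous_on_restrict[OF phi_cont])

lemma phi_mu: "phi mu y = (\<integral>s. simkernel (YY s) y \<partial>UU)"
  unfolding phi_def mu_def by (rule integral_distr[OF YY_meas K1_meas])

lemma Q_mu: "sim_pairing mu mu = (\<integral>t. (\<integral>s. simkernel (YY s) (YY t) \<partial>UU) \<partial>UU)"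
proof -
  have "sim_pairing mu mu = (\<integral>y. phi mu y \<partial>mu)" by (rule sim_pairing_phi)
  also have "\<dots> = (\<integral>t. phi mu (YY t) \<partial>UU)"
    using integral_distr[OF YY_meas phi_meas[OF mu_PX]] unfolding mu_def .
  finally show ?thesis unfolding phi_mu .
qed

lemma realize_main: "\<bar>sim_pairing mu mu - Sp p p (Suc k)\<bar> \<le> 4 * rr k"
proof -
  interpret U: prob_space UU by (rule UU_prob)
  have KY_meas: "(\<lambda>s. simkernel (YY s) y) \<in> borel_measurable UU" for y
    using measurable_compose[OF YY_meas K1_meas] .
  have int1: "integrable UU (\<lambda>s. simkernel (YY s) y)" for y
    by (rule U.integrable_const_bound[where B=1]) (auto simp: KY_meas simkernel_abs)
  have pm_meas: "(\<lambda>t. phi mu (YY t)) \<in> borel_measurable UU"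
    using measurable_compose[OF YY_meas phi_meas[OF mu_PX]] .
  have int2: "integrable UU (\<lambda>t. \<integral>s. simkernel (YY s) (YY t) \<partial>UU)"
    unfolding phi_mu[symmetric]
    by (rule U.integrable_const_bound[where B=1]) (use pm_meas phi_bound[OF mu_PX] in \<open>auto simp: abs_le_iff\<close>)
  have "\<bar>(\<integral>t. (\<integral>s. simkernel (YY s) (YY t) \<partial>UU) \<partial>UU) - (\<Sum>w\<in>WW (Suc k). measure UU (AA (Suc k) w) *
      (\<Sum>v\<in>WW (Suc k). measure UU (AA (Suc k) v) * simkernel (pt v) (pt w)))\<bar> \<le> 4 * rr k"
  proof (rule double_disc[OF UU_prob UU_prob WW_finite AA_sets AA_disj AA_cover AA_sets AA_disj AA_cover int1 int2])
    fix v w s t assume vw: "v \<in> WW (Suc k)" "w \<in> WW (Suc k)" and st: "s \<in> AA (Suc k) v" "t \<in> AA (Suc k) w"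
    have "YY s \<in> closure (CC v)" "YY t \<in> closure (CC w)"
      using st YY_closure unfolding AA_def by auto
    then show "\<bar>simkernel (YY s) (YY t) - simkernel (pt v) (pt w)\<bar> \<le> 4 * rr k"
      by (rule kernel_close[OF vw])
  qed
  moreover have "(\<Sum>w\<in>WW (Suc k). measure UU (AA (Suc k) w) *
      (\<Sum>v\<in>WW (Suc k). measure UU (AA (Suc k) v) * simkernel (pt v) (pt w))) = Sp p p (Suc k)"
    unfolding Sp_def by (intro sum.cong refl) (simp add: AA_meas)
  ultimately show ?thesis unfolding Q_mu by simp
qed

lemma realize_exists: "\<exists>M\<in>PX. \<forall>k. \<bar>sim_pairing M M - Sp p p (Suc k)\<bar> \<le> 4 * rr k"
  using mu_PX realize_main by blast

end


lemma diag_conv: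
  fixes a :: "nat \<Rightarrow> 'i::countable \<Rightarrow> real"
  assumes bdd: "\<And>n i. \<bar>a n i\<bar> \<le> B"
  shows "\<exists>r. strict_mono r \<and> (\<forall>i. convergent (\<lambda>n. a (r n) i))"
proof -
  let ?P = "\<lambda>n. \<lambda>s. convergent (\<lambda>k. a (s k) (from_nat n :: 'i))"
  interpret nat: subseqs ?P
  proof (unfold convergent_def, unfold subseqs_def, auto)
    fix n :: nat and s :: "nat \<Rightarrow> nat" assume s: "strict_mono s"
    have "\<And>k. a (s k) (from_nat n) \<in> {-B..B}"
      using bdd by (simp add: abs_le_iff minus_le_iff)
    then have "\<exists>l s'. strict_mono s' \<and> ((\<lambda>k. a (s k) (from_nat n)) \<circ> s') \<longlonglongrightarrow> l"
      using compact_Icc compact_imp_seq_compact seq_compactE by metis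
    thus "\<exists>s'. strict_mono (s'::nat\<Rightarrow>nat) \<and> (\<exists>l. (\<lambda>k. a (s (s' k)) (from_nat n)) \<longlonglongrightarrow> l)"
      by (auto simp: comp_def)
  qed
  define d where "d = nat.diagseq"
  have subseq: "strict_mono d"
    unfolding d_def using nat.subseq_diagseq by auto
  have cnv: "?P n d" for n
  proof -
    have Pn_seqseq: "?P n (nat.seqseq (Suc n))"
      by (rule nat.seqseq_holds)
    have 1: "(\<lambda>k. a ((nat.seqseq (Suc n) \<circ> (\<lambda>k. nat.fold_reduce (Suc n) k
      (Suc n + k))) k) (from_nat n)) = (\<lambda>k. a (nat.seqseq (Suc n) k) (from_nat n)) \<circ>
      (\<lambda>k. nat.fold_reduce (Suc n) k (Suc n + k))"
      by auto
    have 2: "?P n (d \<circ> ((+) (Suc n)))"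
      unfolding d_def nat.diagseq_seqseq 1
      by (intro convergent_subseq_convergent Pn_seqseq nat.subseq_diagonal_rest)
    then obtain L where 3: "(\<lambda>na. a (d (na + Suc n)) (from_nat n)) \<longlonglongrightarrow> L"
      by (auto simp: add.commute dest: convergentD)
    then have "(\<lambda>k. a (d k) (from_nat n)) \<longlonglongrightarrow> L"
      by (rule LIMSEQ_offset)
    then show ?thesis
      by (auto simp: convergent_def)
  qed
  have "convergent (\<lambda>n. a (d n) i)" for i
    using cnv[of "to_nat i"] by simp
  then show ?thesis using subseq by blast
qed

context cset
begin

lemma diam_bound: "\<exists>D\<ge>0. \<forall>x\<in>X. \<forall>y\<in>X. dist x y \<le> D"
proof -
  obtain c e where ce: "\<forall>y\<in>X. dist c y \<le> e" using compact_imp_bounded[OF cpt] unfolding bounded_def by blast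
  have "dist x y \<le> 2 * e" if "x \<in> X" "y \<in> X" for x y
  proof -
    have "dist c x \<le> e" "dist c y \<le> e" using ce that by auto
    moreover have "dist x y \<le> dist x c + dist c y" by (rule dist_triangle)
    ultimately show ?thesis by (simp add: dist_commute)
  qed
  moreover have "0 \<le> 2 * e" using ce ne by (auto intro: order.trans[OF zero_le_dist])
  ultimately show ?thesis by blast
qed

definition "DD = (SOME D. 0 \<le> D \<and> (\<forall>x\<in>X. \<forall>y\<in>X. dist x y \<le> D))"

lemma DD: "0 \<le> DD" "x \<in> X \<Longrightarrow> y \<in> X \<Longrightarrow> dist x y \<le> DD"
  using someI_ex[OF diam_bound[unfolded Bex_def]] unfolding DD_def by auto

lemma B_lower:
  assumes M: "M \<in> PX" and N: "N \<in> PX"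
  shows "exp (- DD) \<le> sim_pairing M N"
proof -
  interpret M: prob_space M using PX_D[OF M] by simp
  interpret N: prob_space N using PX_D[OF N] by simp
  have "exp (- DD) \<le> phi M y" if y: "y \<in> X" for y
  proof -
    have "(\<integral>x. exp (- DD) \<partial>M) \<le> (\<integral>x. simkernel x y \<partial>M)"
      using int_K1[OF M] DD(2)[OF _ y] PX_D(3)[OF M] unfolding simkernel_def
      by (intro integral_mono) auto
    then show ?thesis unfolding phi_def by (simp add: M.prob_space)
  qed
  then have "(\<integral>x. exp (- DD) \<partial>N) \<le> (\<integral>y. phi M y \<partial>N)"
    using int_phi[OF M N] PX_D(3)[OF N] by (intro integral_mono) auto
  then show ?thesis unfolding sim_pairing_phi by (simp add: N.prob_space)
qed

lemma B_upper:
  assumes M: "M \<in> PX" and N: "N \<in> PX"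
  shows "sim_pairing M N \<le> 1"
proof -
  interpret N: prob_space N using PX_D[OF N] by simp
  have "(\<integral>y. phi M y \<partial>N) \<le> (\<integral>y. 1 \<partial>N)"
    using int_phi[OF M N] phi_bound[OF M] by (intro integral_mono) auto
  then show ?thesis unfolding sim_pairing_phi by (simp add: N.prob_space)
qed

lemma PX_ne: "PX \<noteq> {}"
proof -
  obtain x0 where x0: "x0 \<in> X" using ne by auto
  have "return (restrict_space borel X) x0 \<in> PX"
    unfolding borel_prob_measures_def using x0
    by (auto intro!: prob_space_return simp: space_restrict_space)
  then show ?thesis by blast
qed

definition "qinf = Inf ((\<lambda>M. sim_pairing M M) ` PX)"

lemma qinf_le: "M \<in> PX \<Longrightarrow> qinf \<le> sim_pairing M M"
  unfolding qinf_def
  by (rule cInf_lower) (auto intro!: bdd_belowI[where m="exp (- DD)"] B_lower)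

lemma qinf_ge: "exp (- DD) \<le> qinf"
  unfolding qinf_def using PX_ne
  by (intro cInf_greatest) (auto intro: B_lower)

lemma qinf_pos: "0 < qinf"
  using qinf_ge by (rule less_le_trans[rotated]) simp

lemma qinf_approx: "\<exists>M\<in>PX. sim_pairing M M < qinf + e" if "0 < e"
proof -
  have "Inf ((\<lambda>M. sim_pairing M M) ` PX) < qinf + e" unfolding qinf_def using that by simp
  then show ?thesis using cInf_lessD[of "(\<lambda>M. sim_pairing M M) ` PX" "qinf + e"] PX_ne by auto
qed

lemma rr_tendsto: "rr \<longlonglongrightarrow> 0"
  unfolding rr_def by (rule LIMSEQ_realpow_zero) auto

lemma rr_small: "0 < e \<Longrightarrow> \<exists>k. \<forall>k'\<ge>k. rr k' < e"
  using rr_tendsto unfolding lim_sequentially by (force simp: rr_def)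

lemma zero_if_small: "(\<And>k. \<bar>a\<bar> \<le> c * rr k) \<Longrightarrow> a = (0::real)"
proof (rule ccontr)
  assume h: "\<And>k. \<bar>a\<bar> \<le> c * rr k" and a: "a \<noteq> 0"
  then have c: "0 < c" using h[of 0] by (auto simp: rr_def)
  obtain k where "rr k < \<bar>a\<bar> / c" using rr_small[of "\<bar>a\<bar> / c"] a c by auto
  then have "c * rr k < \<bar>a\<bar>" using c by (simp add: field_simps)
  then show False using h[of k] by simp
qed

theorem exists_min: "\<exists>M\<in>PX. sim_pairing M M = qinf"
proof -
  have "\<forall>n. \<exists>M\<in>PX. sim_pairing M M < qinf + 1 / (Suc n)"
    using qinf_approx by simp
  then obtain Ms where Ms: "\<And>n. Ms n \<in> PX" "\<And>n. sim_pairing (Ms n) (Ms n) < qinf + 1 / (Suc n)"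
    by metis
  have Qlim: "(\<lambda>n. sim_pairing (Ms n) (Ms n)) \<longlonglongrightarrow> qinf"
  proof (rule real_tendsto_sandwich[where f="\<lambda>n. qinf" and h="\<lambda>n. qinf + 1 / Suc n"])
    show "\<forall>\<^sub>F n in sequentially. qinf \<le> sim_pairing (Ms n) (Ms n)" using qinf_le Ms by simp
    show "\<forall>\<^sub>F n in sequentially. sim_pairing (Ms n) (Ms n) \<le> qinf + 1 / Suc n"
      using Ms(2) by (intro always_eventually allI less_imp_le) auto
    show "(\<lambda>n. qinf + 1 / real (Suc n)) \<longlonglongrightarrow> qinf"
      using tendsto_add[OF tendsto_const LIMSEQ_inverse_real_of_nat] by (simp add: inverse_eq_divide)
  qed simp
  have pm_bdd: "\<bar>pm (Ms n) w\<bar> \<le> 1" for n w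
  proof -
    interpret prob_space "Ms n" using PX_D[OF Ms(1)] by simp
    show ?thesis unfolding pm_def by simp
  qed
  obtain r where r: "strict_mono r" "\<And>w. convergent (\<lambda>n. pm (Ms (r n)) w)"
    using diag_conv[of "\<lambda>n w. pm (Ms n) w", OF pm_bdd] by blast
  define p where "p w = lim (\<lambda>n. pm (Ms (r n)) w)" for w
  have plim: "(\<lambda>n. pm (Ms (r n)) w) \<longlonglongrightarrow> p w" for w
    unfolding p_def using r(2) convergent_LIMSEQ_iff by blast
  interpret R: realize X p
  proof
    show "0 \<le> p w" for w
      by (rule LIMSEQ_le_const[OF plim]) (simp add: pm_nonneg)
    show "p [] = 1"
      using plim[of "[]"] pm_Nil[OF Ms(1)] LIMSEQ_unique by (simp add: LIMSEQ_const_iff)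
    show "p w = (\<Sum>j<NN k. p (j#w))" if "w \<in> WW k" for k w
    proof -
      have "(\<lambda>n. \<Sum>j<NN k. pm (Ms (r n)) (j#w)) \<longlonglongrightarrow> (\<Sum>j<NN k. p (j#w))"
        by (intro tendsto_sum plim)
      moreover have "(\<lambda>n. \<Sum>j<NN k. pm (Ms (r n)) (j#w)) = (\<lambda>n. pm (Ms (r n)) w)"
        using pm_add[OF Ms(1) that] by simp
      ultimately show ?thesis using plim[of w] LIMSEQ_unique by metis
    qed
    show "CC w \<noteq> {}" if "0 < p w" for w
    proof (rule ccontr)
      assume "\<not> CC w \<noteq> {}"
      then have "\<And>n. pm (Ms (r n)) w = 0" unfolding pm_def by simp
      then have "p w = 0" using plim[of w] LIMSEQ_unique by (simp add: LIMSEQ_const_iff)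
      then show False using that by simp
    qed
  qed
  obtain M where M: "M \<in> PX" "\<And>k. \<bar>sim_pairing M M - Sp p p (Suc k)\<bar> \<le> 4 * rr k"
    using R.realize_exists by blast
  have "\<bar>sim_pairing M M - qinf\<bar> \<le> 8 * rr k" for k
  proof -
    have SL: "(\<lambda>n. Sp (pm (Ms (r n))) (pm (Ms (r n))) (Suc k)) \<longlonglongrightarrow> Sp p p (Suc k)"
      unfolding Sp_def by (intro tendsto_intros plim)
    have QL: "(\<lambda>n. sim_pairing (Ms (r n)) (Ms (r n))) \<longlonglongrightarrow> qinf"
      using LIMSEQ_subseq_LIMSEQ[OF Qlim r(1)] by (simp add: o_def)
    have "\<bar>qinf - Sp p p (Suc k)\<bar> \<le> 4 * rr k"
      by (rule tendsto_le[OF trivial_limit_sequentially tendsto_const tendsto_rabs[OF tendsto_diff[OF QL SL]]])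
        (use approx_meas Ms(1) in auto)
    then show ?thesis using M(2)[of k] by linarith
  qed
  then have "sim_pairing M M - qinf = 0" by (rule zero_if_small)
  then show ?thesis using M by auto
qed

end


lemma gauss_pd_ext:
  fixes a :: "'i \<Rightarrow> 'h::real_inner"
  assumes fin: "finite W"
  shows "0 \<le> (\<Sum>v\<in>W. \<Sum>w\<in>W. c v * c w * exp (- (norm (a v - a w) ^ 2)))
     + 2 * s * (\<Sum>v\<in>W. c v * exp (- (norm (a v - h) ^ 2))) + s^2"
proof -
  define a' where "a' i = (case i of None \<Rightarrow> h | Some v \<Rightarrow> a v)" for i
  define c' where "c' i = (case i of None \<Rightarrow> s | Some v \<Rightarrow> c v)" for i
  define I where "I = insert None (Some ` W)"
  have finI: "finite I" unfolding I_def using fin by simp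
  have sI: "(\<Sum>i\<in>I. F i) = F None + (\<Sum>v\<in>W. F (Some v))" for F :: "'i option \<Rightarrow> real"
    unfolding I_def using fin by (simp add: sum.reindex)
  have "0 \<le> (\<Sum>i\<in>I. \<Sum>j\<in>I. c' i * c' j * exp (- (norm (a' i - a' j) ^ 2)))"
    by (rule gauss_pd[OF finI])
  also have "\<dots> = s * s + s * (\<Sum>w\<in>W. c w * exp (- (norm (h - a w) ^ 2)))
      + (\<Sum>v\<in>W. c v * s * exp (- (norm (a v - h) ^ 2)) + (\<Sum>w\<in>W. c v * c w * exp (- (norm (a v - a w) ^ 2))))"
    unfolding sI by (simp add: a'_def c'_def sum_distrib_left mult.assoc)
  also have "\<dots> = (\<Sum>v\<in>W. \<Sum>w\<in>W. c v * c w * exp (- (norm (a v - a w) ^ 2)))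
     + 2 * s * (\<Sum>v\<in>W. c v * exp (- (norm (a v - h) ^ 2))) + s^2"
    by (simp add: sum.distrib norm_minus_commute sum_distrib_left power2_eq_square algebra_simps)
  finally show ?thesis .
qed

context cset
begin

lemma Sp_add1: "Sp (\<lambda>w. a w + b w) q k = Sp a q k + Sp b q k"
  unfolding Sp_def by (simp add: distrib_left distrib_right sum.distrib)

lemma Sp_add2: "Sp q (\<lambda>w. a w + b w) k = Sp q a k + Sp q b k"
  unfolding Sp_def by (simp add: distrib_left distrib_right sum.distrib)

lemma Sp_diff1: "Sp (\<lambda>w. a w - b w) q k = Sp a q k - Sp b q k"
  unfolding Sp_def by (simp add: left_diff_distrib right_diff_distrib sum_subtractf)

lemma Sp_diff2: "Sp q (\<lambda>w. a w - b w) k = Sp q a k - Sp q b k"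
  unfolding Sp_def by (simp add: left_diff_distrib right_diff_distrib sum_subtractf)

lemma Sp_scale1: "Sp (\<lambda>w. c * a w) q k = c * Sp a q k"
  unfolding Sp_def by (simp add: sum_distrib_left algebra_simps)

lemma Sp_scale2: "Sp q (\<lambda>w. c * a w) k = c * Sp q a k"
  unfolding Sp_def by (simp add: sum_distrib_left algebra_simps)

lemma Sp_mix: "Sp (\<lambda>w. (a w + b w) / 2) (\<lambda>w. (a w + b w) / 2) k = (Sp a a k + Sp a b k + Sp b a k + Sp b b k) / 4"
proof -
  have e: "(\<lambda>w. (a w + b w) / 2) = (\<lambda>w. (1/2) * (a w + b w))" by auto
  show ?thesis unfolding e Sp_scale1 Sp_scale2 Sp_add1 Sp_add2 by simp
qed

lemma Sp_sq_diff: "Sp (\<lambda>w. a w - b w) (\<lambda>w. a w - b w) k = Sp a a k - Sp a b k - Sp b a k + Sp b b k"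
  by (simp add: Sp_diff1 Sp_diff2)

lemma le_if_small: "(\<And>k. a \<le> c * rr k) \<Longrightarrow> a \<le> (0::real)"
proof (rule ccontr)
  assume h: "\<And>k. a \<le> c * rr k" and a: "\<not> a \<le> 0"
  then have c: "0 < c" using h[of 0] by (auto simp: rr_def)
  obtain k where "rr k < a / c" using rr_small[of "a / c"] a c by auto
  then have "c * rr k < a" using c by (simp add: field_simps)
  then show False using h[of k] by simp
qed

lemma mix_realize:
  assumes M1: "M1 \<in> PX" and M2: "M2 \<in> PX"
  shows "realize X (\<lambda>w. (pm M1 w + pm M2 w) / 2)"
proof
  show "0 \<le> (pm M1 w + pm M2 w) / 2" for w by (simp add: pm_nonneg)
  show "(pm M1 [] + pm M2 []) / 2 = 1" using pm_Nil M1 M2 by simp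
  show "(pm M1 w + pm M2 w) / 2 = (\<Sum>j<NN k. (pm M1 (j#w) + pm M2 (j#w)) / 2)" if "w \<in> WW k" for k w
    using pm_add[OF M1 that] pm_add[OF M2 that] by (simp add: sum.distrib sum_divide_distrib[symmetric])
  show "CC w \<noteq> {}" if "0 < (pm M1 w + pm M2 w) / 2" for w
  proof -
    have "0 < pm M1 w \<or> 0 < pm M2 w"
    proof (rule ccontr)
      assume "\<not> (0 < pm M1 w \<or> 0 < pm M2 w)"
      then have "pm M1 w \<le> 0" "pm M2 w \<le> 0" by auto
      then show False using that by (simp add: field_simps)
    qed
    then show ?thesis using pm_pos by blast
  qed
qed

lemma cross_ge:
  assumes M1: "M1 \<in> PX" and M2: "M2 \<in> PX"
    and q1: "sim_pairing M1 M1 = qinf" and q2: "sim_pairing M2 M2 = qinf"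
  shows "2 * qinf \<le> sim_pairing M1 M2 + sim_pairing M2 M1"
proof -
  interpret R: realize X "\<lambda>w. (pm M1 w + pm M2 w) / 2" by (rule mix_realize[OF M1 M2])
  obtain M where M: "M \<in> PX" "\<And>k. \<bar>sim_pairing M M - Sp (\<lambda>w. (pm M1 w + pm M2 w) / 2) (\<lambda>w. (pm M1 w + pm M2 w) / 2) (Suc k)\<bar> \<le> 4 * rr k"
    using R.realize_exists by blast
  have "2 * qinf - (sim_pairing M1 M2 + sim_pairing M2 M1) \<le> 32 * rr k" for k
  proof -
    have "qinf \<le> sim_pairing M M" by (rule qinf_le[OF M(1)])
    moreover note M(2)[of k] approx_meas[OF M1 M1, of k] approx_meas[OF M1 M2, of k]
      approx_meas[OF M2 M1, of k] approx_meas[OF M2 M2, of k]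
    ultimately show ?thesis unfolding Sp_mix q1 q2 by (simp add: abs_le_iff add_divide_distrib)
  qed
  then show ?thesis using le_if_small[of _ 32] by fastforce
qed

lemma D_small:
  assumes M1: "M1 \<in> PX" and M2: "M2 \<in> PX"
    and q1: "sim_pairing M1 M1 = qinf" and q2: "sim_pairing M2 M2 = qinf"
  shows "Sp (\<lambda>w. pm M1 w - pm M2 w) (\<lambda>w. pm M1 w - pm M2 w) (Suc k) \<le> 16 * rr k"
  using cross_ge[OF assms] approx_meas[OF M1 M1, of k] approx_meas[OF M1 M2, of k]
      approx_meas[OF M2 M1, of k] approx_meas[OF M2 M2, of k]
  unfolding Sp_sq_diff q1 q2 by (simp add: abs_le_iff)

lemma int_cont':
  fixes g :: "'a \<Rightarrow> real"
  assumes M: "M \<in> PX" and g: "continuous_on X g"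
  shows "integrable M g"
proof -
  have "bounded (g ` X)" by (rule compact_imp_bounded[OF compact_continuous_image[OF g cpt]])
  then obtain B where "\<And>x. x \<in> X \<Longrightarrow> \<bar>g x\<bar> \<le> B" unfolding bounded_iff by auto
  then show ?thesis by (rule int_cont[OF M g])
qed

lemma disc_cont:
  fixes g :: "'a \<Rightarrow> real"
  assumes M: "M \<in> PX" and g: "continuous_on X g" and e: "0 < e"
  shows "\<exists>k0. \<forall>k\<ge>k0. \<bar>(\<integral>x. g x \<partial>M) - (\<Sum>v\<in>WW (Suc k). pm M v * g (pt v))\<bar> \<le> e"
proof -
  have "uniformly_continuous_on X g" by (rule compact_uniformly_continuous[OF g cpt])
  then obtain d where d: "0 < d" "\<And>x x'. x \<in> X \<Longrightarrow> x' \<in> X \<Longrightarrow> dist x' x < d \<Longrightarrow> dist (g x') (g x) < e"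
    unfolding uniformly_continuous_on_def using e by metis
  obtain k0 where k0: "\<And>k. k \<ge> k0 \<Longrightarrow> rr k < d / 2" using rr_small[of "d/2"] d by auto
  show ?thesis
  proof (intro exI[of _ k0] allI impI)
    fix k assume k: "k0 \<le> k"
    show "\<bar>(\<integral>x. g x \<partial>M) - (\<Sum>v\<in>WW (Suc k). pm M v * g (pt v))\<bar> \<le> e"
      unfolding pm_def
    proof (rule disc[OF PX_D(1)[OF M] WW_finite])
      show "CC v \<in> sets M" for v using CC_sets PX_D(2)[OF M] by simp
      show "disjoint_family_on CC (WW (Suc k))" by (rule CC_disjoint_family)
      show "\<exists>v\<in>WW (Suc k). x \<in> CC v" if "x \<in> space M" for x
      proof -
        have "x \<in> X" using that PX_D(3)[OF M] by simp
        then show ?thesis by (rule CC_cover)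
      qed
      show "integrable M g" by (rule int_cont'[OF M g])
      show "\<bar>g x - g (pt v)\<bar> \<le> e" if v: "v \<in> WW (Suc k)" and x: "x \<in> CC v" for v x
      proof -
        have ptv: "pt v \<in> CC v" using pt_in x by blast
        have "dist x (pt v) < 2 * rr k" by (rule CC_diam[OF v x ptv])
        also have "\<dots> < d" using k0[OF k] by simp
        finally have "dist (g x) (g (pt v)) < e"
          using d(2)[of "pt v" x] x ptv CC_sub by (auto simp: dist_commute)
        then show ?thesis by (simp add: dist_real_def)
      qed
    qed
  qed
qed

end


locale negt = cset X for X :: "'a::metric_space set" +
  fixes f :: "'a \<Rightarrow> 'h::{real_inner,complete_space}"
  assumes neg: "neg_type_into X f"
begin

lemma f_norm2: "x \<in> X \<Longrightarrow> y \<in> X \<Longrightarrow> (norm (f x - f y)) ^ 2 = dist x y"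
  using neg unfolding neg_type_into_def by (simp add: dist_norm[symmetric])

lemma K_G: "x \<in> X \<Longrightarrow> y \<in> X \<Longrightarrow> simkernel x y = exp (- (norm (f x - f y) ^ 2))"
  unfolding simkernel_def by (simp add: f_norm2)

lemma f_cont: "continuous_on X f"
  unfolding continuous_on_iff
proof (intro ballI allI impI)
  fix x and e :: real assume x: "x \<in> X" and e: "0 < e"
  show "\<exists>d>0. \<forall>x'\<in>X. dist x' x < d \<longrightarrow> dist (f x') (f x) < e"
  proof (intro exI[of _ "e^2"] conjI ballI impI)
    fix x' assume x': "x' \<in> X" and d: "dist x' x < e^2"
    have "dist (f x') (f x) = sqrt (dist x' x)" using neg x x' unfolding neg_type_into_def by blast
    also have "\<dots> < sqrt (e^2)" using d by (simp only: real_sqrt_less_iff)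
    also have "\<dots> = e" using e by simp
    finally show "dist (f x') (f x) < e" .
  qed (use e in simp)
qed

lemma f_inj: "x \<in> X \<Longrightarrow> y \<in> X \<Longrightarrow> f x = f y \<Longrightarrow> x = y"
  using neg unfolding neg_type_into_def by fastforce

lemma pt_X_if: "pm M v \<noteq> pm N v \<Longrightarrow> pt v \<in> X"
proof -
  assume "pm M v \<noteq> pm N v"
  then have "0 < pm M v \<or> 0 < pm N v" using pm_nonneg[of M v] pm_nonneg[of N v] by auto
  then have "CC v \<noteq> {}" using pm_pos by blast
  then show ?thesis using pt_in CC_sub by blast
qed

lemma Sp_G:
  "Sp (\<lambda>w. pm M w - pm N w) (\<lambda>w. pm M w - pm N w) k =
   (\<Sum>v\<in>WW k. \<Sum>w\<in>WW k. (pm M v - pm N v) * (pm M w - pm N w) * exp (- (norm (f (pt v) - f (pt w)) ^ 2)))"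
proof -
  define c where "c v = pm M v - pm N v" for v
  have t: "c w * (c v * simkernel (pt v) (pt w)) = c v * c w * exp (- (norm (f (pt v) - f (pt w)) ^ 2))" for v w
  proof (cases "c v = 0 \<or> c w = 0")
    case True then show ?thesis by auto
  next
    case False
    then have "pt v \<in> X" "pt w \<in> X" using pt_X_if unfolding c_def by auto
    then show ?thesis by (simp add: K_G)
  qed
  have "Sp c c k = (\<Sum>w\<in>WW k. \<Sum>v\<in>WW k. c w * (c v * simkernel (pt v) (pt w)))"
    unfolding Sp_def by (simp add: sum_distrib_left)
  also have "\<dots> = (\<Sum>v\<in>WW k. \<Sum>w\<in>WW k. c w * (c v * simkernel (pt v) (pt w)))"
    by (rule sum.swap)
  also have "\<dots> = (\<Sum>v\<in>WW k. \<Sum>w\<in>WW k. c v * c w * exp (- (norm (f (pt v) - f (pt w)) ^ 2)))"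
    by (simp add: t)
  finally show ?thesis unfolding c_def .
qed

lemma G_agree:
  assumes M: "M \<in> PX" and N: "N \<in> PX"
    and q1: "sim_pairing M M = qinf" and q2: "sim_pairing N N = qinf"
  shows "(\<integral>x. exp (- (norm (f x - h) ^ 2)) \<partial>M) = (\<integral>x. exp (- (norm (f x - h) ^ 2)) \<partial>N)"
proof -
  define g where "g x = exp (- (norm (f x - h) ^ 2))" for x
  have gc: "continuous_on X g" unfolding g_def by (intro continuous_intros f_cont)
  define T where "T = (\<integral>x. g x \<partial>M) - (\<integral>x. g x \<partial>N)"
  have main: "0 \<le> 2 * s * T + s^2" for s
  proof (rule field_le_epsilon)
    fix e :: real assume e: "0 < e"
    define e1 where "e1 = e / (1 + 4 * \<bar>s\<bar>)"
    have e1: "0 < e1" unfolding e1_def using e by (simp add: add_pos_nonneg)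
    have e1e: "e1 * (1 + 4 * \<bar>s\<bar>) = e" unfolding e1_def by (simp add: add_pos_nonneg)
    obtain k1 where k1: "\<And>k. k \<ge> k1 \<Longrightarrow> \<bar>(\<integral>x. g x \<partial>M) - (\<Sum>v\<in>WW (Suc k). pm M v * g (pt v))\<bar> \<le> e1"
      using disc_cont[OF M gc e1] by blast
    obtain k2 where k2: "\<And>k. k \<ge> k2 \<Longrightarrow> \<bar>(\<integral>x. g x \<partial>N) - (\<Sum>v\<in>WW (Suc k). pm N v * g (pt v))\<bar> \<le> e1"
      using disc_cont[OF N gc e1] by blast
    obtain k3 where k3: "\<And>k. k \<ge> k3 \<Longrightarrow> rr k < e1 / 16"
      using rr_small[of "e1/16"] e1 by auto
    define k where "k = max k1 (max k2 k3)"
    have kk: "k1 \<le> k" "k2 \<le> k" "k3 \<le> k" unfolding k_def by auto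
    note a1 = k1[OF kk(1)] and a2 = k2[OF kk(2)] and a3 = k3[OF kk(3)]
    define c where "c v = pm M v - pm N v" for v
    define Tk where "Tk = (\<Sum>v\<in>WW (Suc k). c v * g (pt v))"
    have Tk: "\<bar>Tk - T\<bar> \<le> 2 * e1"
    proof -
      have "Tk = (\<Sum>v\<in>WW (Suc k). pm M v * g (pt v)) - (\<Sum>v\<in>WW (Suc k). pm N v * g (pt v))"
        unfolding Tk_def c_def by (simp add: left_diff_distrib sum_subtractf)
      then show ?thesis using a1 a2 unfolding T_def abs_le_iff by linarith
    qed
    have D: "Sp c c (Suc k) \<le> e1"
      using D_small[OF M N q1 q2, of k] a3 unfolding c_def by simp
    have pd: "0 \<le> Sp c c (Suc k) + 2 * s * Tk + s^2"
      using gauss_pd_ext[where W="WW (Suc k)" and c=c and a="\<lambda>v. f (pt v)" and h=h and s=s] WW_finite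
      unfolding Tk_def g_def c_def Sp_G by simp
    have "2 * s * Tk \<le> 2 * s * T + 4 * \<bar>s\<bar> * e1"
    proof -
      have "2 * s * (Tk - T) \<le> 2 * \<bar>s\<bar> * \<bar>Tk - T\<bar>"
        using abs_ge_self[of "s * (Tk - T)"] by (simp add: abs_mult)
      also have "\<dots> \<le> 2 * \<bar>s\<bar> * (2 * e1)" using Tk by (intro mult_left_mono) auto
      finally show ?thesis by (simp add: algebra_simps)
    qed
    then have "0 \<le> 2 * s * T + s^2 + e1 * (1 + 4 * \<bar>s\<bar>)"
      using pd D by (simp add: algebra_simps)
    then show "0 \<le> 2 * s * T + s^2 + e" using e1e by simp
  qed
  have "0 \<le> 2 * (- T) * T + (- T)^2" by (rule main)
  then have "T^2 \<le> 0" by (simp add: power2_eq_square)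
  then have "T = 0" by simp
  then show ?thesis unfolding T_def g_def by simp
qed

end


context cset
begin

lemma closed_agree:
  assumes M: "M \<in> PX" and N: "N \<in> PX"
    and agree: "\<And>u::'a \<Rightarrow> real. continuous_on X u \<Longrightarrow> (\<integral>x. u x \<partial>M) = (\<integral>x. u x \<partial>N)"
    and F: "closed F"
  shows "measure M (F \<inter> X) = measure N (F \<inter> X)"
proof (cases "F \<inter> X = {}")
  case True then show ?thesis by simp
next
  case False
  define F' where "F' = F \<inter> X"
  have cF: "closed F'" unfolding F'_def using F compact_imp_closed[OF cpt] by auto
  have neF: "F' \<noteq> {}" using False unfolding F'_def .
  define g where "g n x = max 0 (1 - real n * infdist x F')" for n x
  have gc: "continuous_on X (g n)" for n unfolding g_def by (intro continuous_intros)
  have glim: "(\<lambda>n. g n x) \<longlonglongrightarrow> indicator F' x" for x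
  proof (cases "x \<in> F'")
    case True
    then have "infdist x F' = 0" using in_closed_iff_infdist_zero[OF cF neF] by simp
    then show ?thesis using True unfolding g_def by simp
  next
    case False
    then have d: "0 < infdist x F'" using in_closed_iff_infdist_zero[OF cF neF] infdist_nonneg[of x F']
      by (simp add: order_less_le)
    obtain n0 :: nat where n0: "1 / infdist x F' < n0" using reals_Archimedean2 by blast
    have "g n x = 0" if "n \<ge> n0" for n
    proof -
      have "1 < real n0 * infdist x F'" using n0 d by (simp add: field_simps)
      also have "\<dots> \<le> real n * infdist x F'" using that d by (intro mult_right_mono) auto
      finally show ?thesis unfolding g_def by simp
    qed
    then have "\<forall>\<^sub>F n in sequentially. g n x = indicator F' x"
      using False unfolding eventually_sequentially by auto
    then show ?thesis by (rule tendsto_eventually)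
  qed
  have lim: "(\<lambda>n. \<integral>x. g n x \<partial>Q) \<longlonglongrightarrow> measure Q F'" if Q: "Q \<in> PX" for Q
  proof -
    interpret prob_space Q using PX_D[OF Q] by simp
    have F'Q: "F' \<in> sets Q" unfolding F'_def using PX_D(2)[OF Q] F
      by (auto simp: sets_restrict_space)
    have "(\<lambda>n. \<integral>x. g n x \<partial>Q) \<longlonglongrightarrow> (\<integral>x. indicator F' x \<partial>Q)"
    proof (rule integral_dominated_convergence[where w="\<lambda>x. 1"])
      show "indicator F' \<in> borel_measurable Q" using F'Q by simp
      show "g n \<in> borel_measurable Q" for n by (rule meas_cont[OF Q gc])
      show "integrable Q (\<lambda>x. 1)" by simp
      show "AE x in Q. (\<lambda>n. g n x) \<longlonglongrightarrow> indicator F' x" using glim by simp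
      show "AE x in Q. norm (g n x) \<le> 1" for n unfolding g_def
        using infdist_nonneg by (intro AE_I2) (auto intro!: mult_nonneg_nonneg)
    qed
    moreover have "(\<integral>x. indicator F' x \<partial>Q) = measure Q F'"
      using F'Q sets.sets_into_space by (simp add: Int_absorb2)
    ultimately show ?thesis by simp
  qed
  have "(\<lambda>n. \<integral>x. g n x \<partial>M) = (\<lambda>n. \<integral>x. g n x \<partial>N)"
  proof
    fix n
    show "(\<integral>x. g n x \<partial>M) = (\<integral>x. g n x \<partial>N)" using agree[of "g n"] gc[of n] by simp
  qed
  then have "measure M F' = measure N F'" using lim[OF M] lim[OF N] LIMSEQ_unique by metis
  then show ?thesis unfolding F'_def .
qed

lemma meas_eq:
  assumes M: "M \<in> PX" and N: "N \<in> PX"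
    and agree: "\<And>u::'a \<Rightarrow> real. continuous_on X u \<Longrightarrow> (\<integral>x. u x \<partial>M) = (\<integral>x. u x \<partial>N)"
  shows "M = N"
proof -
  interpret MM: prob_space M using PX_D[OF M] by simp
  interpret NN: prob_space N using PX_D[OF N] by simp
  have idm: "(\<lambda>x. x) \<in> measurable Q borel" if Q: "Q \<in> PX" for Q
  proof -
    have eq: "measurable Q borel = measurable (restrict_space borel X) borel"
      by (rule measurable_cong_sets[OF PX_D(2)[OF Q] refl])
    show ?thesis unfolding eq by (rule measurable_restrict_space1[OF measurable_ident_sets[OF refl]])
  qed
  have ed: "emeasure (distr Q borel (\<lambda>x. x)) B = emeasure Q (B \<inter> X)" if Q: "Q \<in> PX" and B: "B \<in> sets borel" for Q B
    using emeasure_distr[OF idm[OF Q] B] PX_D(3)[OF Q] by simp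
  have dd: "distr M borel (\<lambda>x. x) = distr N borel (\<lambda>x. x)"
  proof (rule measure_eqI_generator_eq[where E="Collect closed" and \<Omega>=UNIV and A="\<lambda>_. UNIV"])
    show "Int_stable (Collect closed)" by (auto simp: Int_stable_def)
    show "Collect closed \<subseteq> Pow UNIV" by simp
    show "emeasure (distr M borel (\<lambda>x. x)) F = emeasure (distr N borel (\<lambda>x. x)) F" if "F \<in> Collect closed" for F
    proof -
      have F: "closed F" using that by simp
      then have "F \<in> sets borel" by simp
      then show ?thesis using ed[OF M] ed[OF N] closed_agree[OF M N agree F]
        by (simp add: MM.emeasure_eq_measure NN.emeasure_eq_measure)
    qed
    show "sets (distr M borel (\<lambda>x. x)) = sigma_sets UNIV (Collect closed)"
      by (simp add: borel_eq_closed)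
    show "sets (distr N borel (\<lambda>x. x)) = sigma_sets UNIV (Collect closed)"
      by (simp add: borel_eq_closed)
    show "range (\<lambda>_. UNIV) \<subseteq> Collect closed" by simp
    show "(\<Union>i::nat. UNIV) = UNIV" by simp
    show "emeasure (distr M borel (\<lambda>x. x)) UNIV \<noteq> \<infinity>" for i :: nat
      using ed[OF M, of UNIV] by simp
  qed
  show ?thesis
  proof (rule measure_eqI)
    show "sets M = sets N" using PX_D(2)[OF M] PX_D(2)[OF N] by simp
    fix A assume "A \<in> sets M"
    then obtain B where B: "B \<in> sets borel" "A = X \<inter> B"
      using PX_D(2)[OF M] by (auto simp: sets_restrict_space)
    have "emeasure M A = emeasure (distr M borel (\<lambda>x. x)) B" using ed[OF M B(1)] B(2) by (simp add: Int_commute)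
    also have "\<dots> = emeasure (distr N borel (\<lambda>x. x)) B" using dd by simp
    also have "\<dots> = emeasure N A" using ed[OF N B(1)] B(2) by (simp add: Int_commute)
    finally show "emeasure M A = emeasure N A" .
  qed
qed

end


context negt
begin

definition wt where "wt x = exp (- (norm (f x) ^ 2))"

lemma wt_pos: "0 < wt x" and wt_le1: "wt x \<le> 1"
  unfolding wt_def by auto

lemma wt_cont: "continuous_on X wt"
  unfolding wt_def by (intro continuous_intros f_cont)

lemma G_split: "exp (- (norm (f x - h) ^ 2)) = wt x * exp (2 * (f x \<bullet> h)) * exp (- (norm h ^ 2))"
proof -
  have "(norm (f x - h)) ^ 2 = norm (f x) ^ 2 - 2 * (f x \<bullet> h) + norm h ^ 2"
    by (simp add: power2_norm_eq_inner inner_diff_left inner_diff_right inner_commute)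
  then show ?thesis unfolding wt_def by (simp add: exp_add[symmetric] exp_diff)
qed

lemma WE_agree:
  assumes M: "M \<in> PX" and N: "N \<in> PX"
    and q1: "sim_pairing M M = qinf" and q2: "sim_pairing N N = qinf"
  shows "(\<integral>x. wt x * exp (2 * (f x \<bullet> h)) \<partial>M) = (\<integral>x. wt x * exp (2 * (f x \<bullet> h)) \<partial>N)"
proof -
  have "(\<integral>x. wt x * exp (2 * (f x \<bullet> h)) \<partial>M) * exp (- (norm h ^ 2)) =
        (\<integral>x. wt x * exp (2 * (f x \<bullet> h)) \<partial>N) * exp (- (norm h ^ 2))"
    using G_agree[OF M N q1 q2, of h] unfolding G_split by simp
  then show ?thesis by simp
qed

inductive Rg :: "('a \<Rightarrow> real) \<Rightarrow> bool" where
  base: "Rg (\<lambda>x. c * exp (2 * (f x \<bullet> h)))"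
| add: "Rg g1 \<Longrightarrow> Rg g2 \<Longrightarrow> Rg (\<lambda>x. g1 x + g2 x)"

lemma Rg_mult_base: "Rg g \<Longrightarrow> Rg (\<lambda>x. (c * exp (2 * (f x \<bullet> h))) * g x)"
proof (induction rule: Rg.induct)
  case (base d h')
  have "(\<lambda>x. (c * exp (2 * (f x \<bullet> h))) * (d * exp (2 * (f x \<bullet> h')))) = (\<lambda>x. (c * d) * exp (2 * (f x \<bullet> (h + h'))))"
    by (simp add: inner_add_right distrib_left exp_add mult_ac)
  then show ?case using Rg.base by metis
next
  case (add g1 g2)
  then show ?case using Rg.add[OF add.IH] by (simp add: distrib_left)
qed

lemma Rg_mult: "Rg g1 \<Longrightarrow> Rg g2 \<Longrightarrow> Rg (\<lambda>x. g1 x * g2 x)"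
proof (induction arbitrary: g2 rule: Rg.induct)
  case (base c h)
  then show ?case by (rule Rg_mult_base)
next
  case (add g1 g1')
  then show ?case using Rg.add[OF add.IH(1)[OF add.prems] add.IH(2)[OF add.prems]] by (simp add: distrib_right)
qed

lemma Rg_const: "Rg (\<lambda>x. c)"
  using Rg.base[of c 0] by simp

lemma Rg_cont: "Rg g \<Longrightarrow> continuous_on X g"
  by (induction rule: Rg.induct) (auto intro!: continuous_intros f_cont)

lemma Rg_sep: "x \<in> X \<Longrightarrow> y \<in> X \<Longrightarrow> x \<noteq> y \<Longrightarrow> \<exists>g. Rg g \<and> g x \<noteq> g y"
proof -
  assume x: "x \<in> X" and y: "y \<in> X" and xy: "x \<noteq> y"
  define h where "h = f x - f y"
  have "h \<noteq> 0" using f_inj[OF x y] xy unfolding h_def by auto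
  then have "0 < h \<bullet> h" by simp
  then have "f y \<bullet> h < f x \<bullet> h" unfolding h_def by (simp add: inner_diff_left inner_diff_right)
  then have "exp (2 * (f y \<bullet> h)) \<noteq> exp (2 * (f x \<bullet> h))" by simp
  then show ?thesis using Rg.base[of 1 h] by (intro exI[of _ "\<lambda>x. 1 * exp (2 * (f x \<bullet> h))"]) auto
qed

lemma Rg_int:
  assumes M: "M \<in> PX" and N: "N \<in> PX"
    and q1: "sim_pairing M M = qinf" and q2: "sim_pairing N N = qinf"
  shows "Rg g \<Longrightarrow> (\<integral>x. wt x * g x \<partial>M) = (\<integral>x. wt x * g x \<partial>N)"
proof (induction rule: Rg.induct)
  case (base c h)
  have e: "(\<lambda>x. wt x * (c * exp (2 * (f x \<bullet> h)))) = (\<lambda>x. c * (wt x * exp (2 * (f x \<bullet> h))))"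
    by (simp add: mult_ac)
  show ?case unfolding e using WE_agree[OF assms, of h] by simp
next
  case (add g1 g2)
  have i: "integrable Q (\<lambda>x. wt x * g x)" if "Q \<in> PX" "Rg g" for Q g
    using that by (intro int_cont' continuous_intros wt_cont Rg_cont)
  have e: "(\<lambda>x. wt x * (g1 x + g2 x)) = (\<lambda>x. wt x * g1 x + wt x * g2 x)" by (simp add: distrib_left)
  show ?case unfolding e using add i[OF M] i[OF N] by simp
qed

lemma cont_agree:
  assumes M: "M \<in> PX" and N: "N \<in> PX"
    and q1: "sim_pairing M M = qinf" and q2: "sim_pairing N N = qinf"
    and u: "continuous_on X (u :: 'a \<Rightarrow> real)"
  shows "(\<integral>x. u x \<partial>M) = (\<integral>x. u x \<partial>N)"
proof -
  have approx: "\<bar>(\<integral>x. u x \<partial>M) - (\<integral>x. u x \<partial>N)\<bar> \<le> 2 * e" if e: "0 < e" for e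
  proof -
    have uc: "continuous_on X (\<lambda>x. u x / wt x)"
      using u wt_cont wt_pos by (intro continuous_on_divide) (auto simp: less_imp_neq[symmetric])
    obtain g where g: "Rg g" "\<And>x. x \<in> X \<Longrightarrow> \<bar>u x / wt x - g x\<bar> < e"
      using Stone_Weierstrass_HOL[of X Rg "\<lambda>x. u x / wt x" e, OF cpt Rg_const Rg_cont _ _ _ uc e]
        Rg.add Rg_mult Rg_sep by blast
    have close: "\<bar>u x - wt x * g x\<bar> \<le> e" if x: "x \<in> X" for x
    proof -
      have "u x - wt x * g x = wt x * (u x / wt x - g x)"
        using wt_pos[of x] by (simp add: field_simps)
      then have "\<bar>u x - wt x * g x\<bar> = wt x * \<bar>u x / wt x - g x\<bar>"
        using wt_pos[of x] by (simp add: abs_mult)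
      also have "\<dots> \<le> 1 * e"
        using g(2)[OF x] wt_le1[of x] wt_pos[of x] by (intro mult_mono) auto
      finally show ?thesis by simp
    qed
    have one: "\<bar>(\<integral>x. u x \<partial>Q) - (\<integral>x. wt x * g x \<partial>Q)\<bar> \<le> e" if Q: "Q \<in> PX" for Q
    proof -
      interpret prob_space Q using PX_D[OF Q] by simp
      have iu: "integrable Q u" by (rule int_cont'[OF Q u])
      have ig: "integrable Q (\<lambda>x. wt x * g x)"
        by (intro int_cont'[OF Q] continuous_intros wt_cont Rg_cont g(1))
      have "(\<integral>x. u x - wt x * g x \<partial>Q) \<le> (\<integral>x. e \<partial>Q)"
        using iu ig close PX_D(3)[OF Q] by (intro integral_mono) (auto simp: abs_le_iff)
      moreover have "(\<integral>x. wt x * g x - u x \<partial>Q) \<le> (\<integral>x. e \<partial>Q)"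
        using iu ig close PX_D(3)[OF Q] by (intro integral_mono) (auto simp: abs_le_iff)
      ultimately show ?thesis using iu ig by (simp add: prob_space abs_le_iff)
    qed
    have "(\<integral>x. wt x * g x \<partial>M) = (\<integral>x. wt x * g x \<partial>N)" by (rule Rg_int[OF M N q1 q2 g(1)])
    then show ?thesis using one[OF M] one[OF N] by (simp add: abs_le_iff)
  qed
  have "\<bar>(\<integral>x. u x \<partial>M) - (\<integral>x. u x \<partial>N)\<bar> \<le> 0"
  proof (rule field_le_epsilon)
    fix e :: real assume "0 < e"
    then show "\<bar>(\<integral>x. u x \<partial>M) - (\<integral>x. u x \<partial>N)\<bar> \<le> 0 + e" using approx[of "e/2"] by simp
  qed
  then show ?thesis by simp
qed

lemma unique_min:
  assumes M: "M \<in> PX" and N: "N \<in> PX"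
    and q1: "sim_pairing M M = qinf" and q2: "sim_pairing N N = qinf"
  shows "M = N"
  by (rule meas_eq[OF M N cont_agree[OF assms]])

end

theorem mainTheorem4:
  fixes X :: "'a::metric_space set" and f :: "'a \<Rightarrow> 'h::{real_inner,complete_space}"
  assumes "compact X" and "X \<noteq> {}"
    and "neg_type_into X f"
  shows "\<exists>!\<mu>. diversity_maximizing X \<mu>"
proof -
  interpret negt X f by unfold_locales (use assms in auto)
  obtain M0 where M0: "M0 \<in> PX" "sim_pairing M0 M0 = qinf" using exists_min by blast
  have md: "max_diversity X = 1 / qinf"
    unfolding max_diversity_def
  proof (rule cSup_eq_maximum)
    show "1 / qinf \<in> (\<lambda>\<mu>. 1 / sim_pairing \<mu> \<mu>) ` PX" using M0 by force
    show "x \<le> 1 / qinf" if "x \<in> (\<lambda>\<mu>. 1 / sim_pairing \<mu> \<mu>) ` PX" for x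
      using that qinf_le qinf_pos less_le_trans[OF qinf_pos qinf_le] by (auto intro!: divide_left_mono mult_pos_pos)
  qed
  have dm: "diversity_maximizing X M \<longleftrightarrow> M \<in> PX \<and> sim_pairing M M = qinf" for M
  proof -
    have "M \<in> PX \<Longrightarrow> 0 < sim_pairing M M" using qinf_le qinf_pos by (meson less_le_trans)
    then show ?thesis unfolding diversity_maximizing_def md using qinf_pos by auto
  qed
  show ?thesis
  proof (rule ex_ex1I)
    show "\<exists>\<mu>. diversity_maximizing X \<mu>" using M0 dm by blast
    show "\<mu> = \<nu>" if "diversity_maximizing X \<mu>" "diversity_maximizing X \<nu>" for \<mu> \<nu>
      using that unique_min unfolding dm by blast
  qed
qed

end
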